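(* Let $f:\subseteq X\to\mathbb{N}$ and $f_{\mathbb S}:\subseteq X\to\mathbb{S}$ be single-valued problems that are not constant on their domains. Then (1) $f'$ is co-complete and co-total; (2) $f_{\mathbb S}'$ is co-complete.
   Context: Represented space $(X,\delta_X)$: set with surjective partial $\delta_X:\subseteq\mathbb{N}^\mathbb{N}\to X$. $\mathbb{N}$ is represented by $p\mapsto p(0)$; Sierpiński space $\mathbb{S}=\{0,1\}$ is represented by $\delta_{\mathbb S}(p)=0\iff p=000\dots$. A problem $f:\subseteq X\rightrightarrows Y$ is a partial multi-valued map with nonempty values on its domain; $F\vdash f$ means $\delta_YF(p)\in f(\delta_X(p))$ whenever $\delta_X(p)\in\mathrm{dom}(f)$. $f\le_W g$ iff there are computable partial $H,K:\subseteq\mathbb{N}^\mathbb{N}\to\mathbb{N}^\mathbb{N}$ with $H\langle\mathrm{id},GK\rangle\vdash f$ for all $G\vdash g$ (where $\langle p,q\rangle(2n)=p(n),\langle p,q\rangle(2n+1)=q(n)$). $\lim:\subseteq\mathbb{N}^\mathbb{N}\to\mathbb{N}^\mathbb{N}$ maps $\langle p_0,p_1,\dots\rangle$ to $\lim_n p_n$; the jump $f'$ of $f:\subseteq X\rightrightarrows Y$ is the same map with input representation $\delta_X\circ\lim$. For $p\in\mathbb{N}^\mathbb{N}$, $p-1$ is the concatenation of $p(0)-1,p(1)-1,\dots$ with $0-1$ the empty word; the completion of $(X,\delta_X)$ is $\overline X=X\cup\{\bot\}$ with $\delta_{\overline X}(p)=\delta_X(p-1)$ if $p-1$ is an infinite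 sequence in $\mathrm{dom}(\delta_X)$ and $\bot$ otherwise. For $g:\subseteq U\rightrightarrows V$: $\overline g:\overline U\rightrightarrows\overline V$ equals $g$ on $\mathrm{dom}(g)$ and $\overline V$ elsewhere; $\mathsf Tg:U\rightrightarrows V$ equals $g$ on $\mathrm{dom}(g)$ and $V$ elsewhere. A problem $h$ is co-complete if for all problems $g$: $h\le_W\overline g\iff h\le_W g$; it is co-total if for all problems $g$: $h\le_W\mathsf Tg\iff h\le_W g$. *)

theory Defs
  imports Main "HOL-Library.Nat_Bijection" "HOL-Library.Infinite_Set"
begin

datatype recf = Zr | Sc | Proj nat | Comp recf "recf list" | Prec recf recf | Mn recf

definition arg :: "nat \<Rightarrow> nat list \<Rightarrow> nat" where
  "arg i xs = (if i < length xs then xs ! i else 0)"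

inductive eval :: "recf \<Rightarrow> nat list \<Rightarrow> nat \<Rightarrow> bool" where
  ev_Z: "eval Zr xs 0"
| ev_S: "eval Sc xs (Suc (arg 0 xs))"
| ev_P: "eval (Proj i) xs (arg i xs)"
| ev_C: "list_all2 (\<lambda>g y. eval g xs y) gs ys \<Longrightarrow> eval f ys z \<Longrightarrow> eval (Comp f gs) xs z"
| ev_R0: "eval f xs y \<Longrightarrow> eval (Prec f g) (0 # xs) y"
| ev_RS: "eval (Prec f g) (n # xs) r \<Longrightarrow> eval g (r # n # xs) y \<Longrightarrow> eval (Prec f g) (Suc n # xs) y"
| ev_M: "eval f (n # xs) 0 \<Longrightarrow> (\<forall>m<n. \<exists>y. y \<noteq> 0 \<and> eval f (m # xs) y) \<Longrightarrow> eval (Mn f) xs n"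

definition total_rec2 :: "(nat \<Rightarrow> nat \<Rightarrow> nat) \<Rightarrow> bool" where
  "total_rec2 h \<longleftrightarrow> (\<exists>c. \<forall>x y. eval c [x, y] (h x y))"

type_synonym baire = "nat \<Rightarrow> nat"

definition pref :: "baire \<Rightarrow> nat \<Rightarrow> nat" where
  "pref p m = list_encode (map p [0..<m])"

text \<open>F :\<subseteq> N^N \<rightarrow> N^N is computable iff it has a total recursive associate h:
  on input (code of p|m, n), h returns 0 (no answer yet) or (F(p)(n) + 1), and for every
  p in dom F and every n some prefix yields an answer. (Equivalent to Type-2 machine
  computability; nothing is required outside dom F.)\<close>
definition computable :: "(baire \<Rightarrow> baire option) \<Rightarrow> bool" where
  "computable F \<longleftrightarrow> (\<exists>h. total_rec2 h \<and>
     (\<forall>p q. F p = Some q \<longrightarrow>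
        (\<forall>n. (\<exists>m. h (pref p m) n \<noteq> 0) \<and> (\<forall>m. h (pref p m) n \<noteq> 0 \<longrightarrow> h (pref p m) n = Suc (q n)))))"

definition bpair :: "baire \<Rightarrow> baire \<Rightarrow> baire" where
  "bpair p q n = (if even n then p (n div 2) else q (n div 2))"

text \<open>A represented space is given by its partial surjection delta; the space is ran delta.\<close>
type_synonym 'x rep = "baire \<Rightarrow> 'x option"

text \<open>A problem f :\<subseteq> X \<rightrightarrows> Y is encoded as f :: 'x \<Rightarrow> 'y set with
  dom f = {x. f x \<noteq> {}}.\<close>
definition pdom :: "('x \<Rightarrow> 'y set) \<Rightarrow> 'x set" where
  "pdom f = {x. f x \<noteq> {}}"

definition problem :: "'x rep \<Rightarrow> 'y rep \<Rightarrow> ('x \<Rightarrow> 'y set) \<Rightarrow> bool" where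
  "problem dX dY f \<longleftrightarrow> (\<forall>x\<in>pdom f. x \<in> ran dX \<and> f x \<subseteq> ran dY)"

definition realizes :: "'x rep \<Rightarrow> 'y rep \<Rightarrow> (baire \<Rightarrow> baire option) \<Rightarrow> ('x \<Rightarrow> 'y set) \<Rightarrow> bool" where
  "realizes dX dY F f \<longleftrightarrow>
     (\<forall>p x. dX p = Some x \<and> x \<in> pdom f \<longrightarrow> (\<exists>q y. F p = Some q \<and> dY q = Some y \<and> y \<in> f x))"

definition W_red :: "'x rep \<Rightarrow> 'y rep \<Rightarrow> ('x \<Rightarrow> 'y set) \<Rightarrow> 'u rep \<Rightarrow> 'v rep \<Rightarrow> ('u \<Rightarrow> 'v set) \<Rightarrow> bool" where
  "W_red dX dY f dU dV g \<longleftrightarrow>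
     (\<exists>H K. computable H \<and> computable K \<and>
        (\<forall>G. realizes dU dV G g \<longrightarrow>
           realizes dX dY (\<lambda>p. case K p of None \<Rightarrow> None | Some k \<Rightarrow>
                (case G k of None \<Rightarrow> None | Some r \<Rightarrow> H (bpair p r))) f))"

definition rep_nat :: "nat rep" where
  "rep_nat p = Some (p 0)"

text \<open>Sierpinski space: False stands for 0, True for 1.\<close>
definition rep_S :: "bool rep" where
  "rep_S p = Some (p \<noteq> (\<lambda>_. 0))"

text \<open>Countable tupling: <p_0,p_1,...>(prod_encode(i,j)) = p_i(j).\<close>
definition lim_baire :: "baire \<Rightarrow> baire option" where
  "lim_baire p = (if \<forall>j. \<exists>a. \<forall>\<^sub>F n in sequentially. p (prod_encode (n, j)) = a
     then Some (\<lambda>j. THE a. \<forall>\<^sub>F n in sequentially. p (prod_encode (n, j)) = a) else None)"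

definition jump_rep :: "'x rep \<Rightarrow> 'x rep" where
  "jump_rep dX p = (case lim_baire p of None \<Rightarrow> None | Some q \<Rightarrow> dX q)"

definition nzset :: "baire \<Rightarrow> nat set" where
  "nzset p = {i. p i \<noteq> 0}"

definition minus1 :: "baire \<Rightarrow> baire" where
  "minus1 p n = p (enumerate (nzset p) n) - 1"

text \<open>Completion: None plays the role of \<bottom>.\<close>
definition completion :: "'x rep \<Rightarrow> 'x option rep" where
  "completion dX p = Some (if infinite (nzset p) \<and> dX (minus1 p) \<noteq> None
      then dX (minus1 p) else None)"

definition carrier_bar :: "'x rep \<Rightarrow> 'x option set" where
  "carrier_bar dX = insert None (Some ` ran dX)"

definition cbar :: "'v rep \<Rightarrow> ('u \<Rightarrow> 'v set) \<Rightarrow> ('u option \<Rightarrow> 'v option set)" where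
  "cbar dV g y = (case y of Some u \<Rightarrow> (if u \<in> pdom g then Some ` g u else carrier_bar dV)
                           | None \<Rightarrow> carrier_bar dV)"

definition Ttot :: "'v rep \<Rightarrow> ('u \<Rightarrow> 'v set) \<Rightarrow> ('u \<Rightarrow> 'v set)" where
  "Ttot dV g u = (if u \<in> pdom g then g u else ran dV)"

definition co_complete :: "'u itself \<Rightarrow> 'v itself \<Rightarrow> 'x rep \<Rightarrow> 'y rep \<Rightarrow> ('x \<Rightarrow> 'y set) \<Rightarrow> bool" where
  "co_complete _ _ dX dY h \<longleftrightarrow>
     (\<forall>(dU::'u rep) (dV::'v rep) g. problem dU dV g \<longrightarrow>
        (W_red dX dY h (completion dU) (completion dV) (cbar dV g) \<longleftrightarrow> W_red dX dY h dU dV g))"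

definition co_total :: "'u itself \<Rightarrow> 'v itself \<Rightarrow> 'x rep \<Rightarrow> 'y rep \<Rightarrow> ('x \<Rightarrow> 'y set) \<Rightarrow> bool" where
  "co_total _ _ dX dY h \<longleftrightarrow>
     (\<forall>(dU::'u rep) (dV::'v rep) g. problem dU dV g \<longrightarrow>
        (W_red dX dY h dU dV (Ttot dV g) \<longleftrightarrow> W_red dX dY h dU dV g))"

definition sv :: "('x \<Rightarrow> 'y option) \<Rightarrow> ('x \<Rightarrow> 'y set)" where
  "sv f x = set_option (f x)"

end

theory Submission
  imports Defs
begin

definition recfn :: "nat \<Rightarrow> (nat list \<Rightarrow> nat) \<Rightarrow> bool" where
  "recfn n F \<longleftrightarrow> (\<exists>c. \<forall>xs. length xs = n \<longrightarrow> eval c xs (F xs))"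

fun pr :: "(nat list \<Rightarrow> nat) \<Rightarrow> (nat list \<Rightarrow> nat) \<Rightarrow> nat \<Rightarrow> nat list \<Rightarrow> nat" where
  "pr F G 0 ys = F ys"
| "pr F G (Suc k) ys = G (pr F G k ys # k # ys)"

lemma recfn_cong: "recfn n F \<Longrightarrow> (\<And>xs. length xs = n \<Longrightarrow> F xs = G xs) \<Longrightarrow> recfn n G"
  unfolding recfn_def by metis

lemma rf_zero: "recfn n (\<lambda>_. 0)"
  unfolding recfn_def using ev_Z by blast

lemma rf_proj: "i < n \<Longrightarrow> recfn n (\<lambda>xs. xs ! i)"
  unfolding recfn_def using ev_P by (metis arg_def)

lemma codes_exist:
  assumes "\<forall>g\<in>set gs. \<exists>c. \<forall>xs. length xs = n \<longrightarrow> eval c xs (g xs)"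
  shows "\<exists>cs. list_all2 (\<lambda>c g. \<forall>xs. length xs = n \<longrightarrow> eval c xs (g xs)) cs gs"
  using assms
proof (induction gs)
  case Nil then show ?case by auto
next
  case (Cons g gs)
  then obtain cs where "list_all2 (\<lambda>c g. \<forall>xs. length xs = n \<longrightarrow> eval c xs (g xs)) cs gs" by auto
  moreover obtain c where "\<forall>xs. length xs = n \<longrightarrow> eval c xs (g xs)" using Cons.prems by auto
  ultimately show ?case by (intro exI[of _ "c # cs"]) auto
qed

lemma rf_comp:
  assumes "recfn m F" "length gs = m" "\<forall>g\<in>set gs. recfn n g"
  shows "recfn n (\<lambda>xs. F (map (\<lambda>g. g xs) gs))"
proof -
  obtain cF where cF: "\<forall>xs. length xs = m \<longrightarrow> eval cF xs (F xs)" using assms(1) recfn_def by auto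
  obtain cs where cs: "list_all2 (\<lambda>c g. \<forall>xs. length xs = n \<longrightarrow> eval c xs (g xs)) cs gs"
    using codes_exist assms(3) unfolding recfn_def by blast
  have "eval (Comp cF cs) xs (F (map (\<lambda>g. g xs) gs))" if "length xs = n" for xs
  proof (rule ev_C)
    show "list_all2 (\<lambda>g y. eval g xs y) cs (map (\<lambda>g. g xs) gs)"
      using cs that by (auto simp: list_all2_conv_all_nth)
    show "eval cF (map (\<lambda>g. g xs) gs) (F (map (\<lambda>g. g xs) gs))" using cF assms(2) by auto
  qed
  then show ?thesis unfolding recfn_def by blast
qed

lemma rf_prec_raw:
  assumes "recfn n F" "recfn (Suc (Suc n)) G"
  shows "recfn (Suc n) (\<lambda>xs. pr F G (hd xs) (tl xs))"
proof -
  obtain cF where cF: "\<forall>xs. length xs = n \<longrightarrow> eval cF xs (F xs)" using assms(1) recfn_def by auto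
  obtain cG where cG: "\<forall>xs. length xs = Suc (Suc n) \<longrightarrow> eval cG xs (G xs)" using assms(2) recfn_def by auto
  have "\<forall>ys. length ys = n \<longrightarrow> eval (Prec cF cG) (k # ys) (pr F G k ys)" for k
  proof (induction k)
    case 0 then show ?case using cF by (auto intro: ev_R0)
  next
    case (Suc k) then show ?case using cG by (auto intro: ev_RS)
  qed
  then show ?thesis unfolding recfn_def
    by (metis length_Suc_conv list.sel(1,3))
qed

lemma len1: "length xs = Suc 0 \<Longrightarrow> xs = [xs!0]"
  by (cases xs) auto
lemma len2: "length xs = 2 \<Longrightarrow> xs = [xs!0, xs!1]"
  by (cases xs; cases "tl xs") auto
lemma len3: "length xs = 3 \<Longrightarrow> xs = [xs!0, xs!1, xs!2]"
  by (cases xs; cases "tl xs"; cases "tl (tl xs)") (auto simp: numeral_3_eq_3)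

lemma rf_suc1: "recfn 1 (\<lambda>xs. Suc (xs!0))"
  unfolding recfn_def using ev_S by (metis arg_def less_numeral_extra(1) One_nat_def zero_less_one)

lemma rf_comp1: "recfn 1 F \<Longrightarrow> recfn n g \<Longrightarrow> recfn n (\<lambda>xs. F [g xs])"
  using rf_comp[of 1 F "[g]" n] by simp
lemma rf_comp2: "recfn 2 F \<Longrightarrow> recfn n g \<Longrightarrow> recfn n h \<Longrightarrow> recfn n (\<lambda>xs. F [g xs, h xs])"
  using rf_comp[of 2 F "[g,h]" n] by simp
lemma rf_comp3: "recfn 3 F \<Longrightarrow> recfn n g \<Longrightarrow> recfn n h \<Longrightarrow> recfn n k \<Longrightarrow> recfn n (\<lambda>xs. F [g xs, h xs, k xs])"
  using rf_comp[of 3 F "[g,h,k]" n] by (simp add: numeral_3_eq_3)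

lemma rf_Suc: "recfn n g \<Longrightarrow> recfn n (\<lambda>xs. Suc (g xs))"
  using rf_comp1[OF rf_suc1] by simp

lemma rf_const: "recfn n (\<lambda>_. k)"
  by (induction k) (auto intro: rf_zero rf_Suc[of n "\<lambda>_. _", simplified])

lemma rf_prec:
  assumes "recfn n F" "recfn (Suc (Suc n)) G" "Suc n = m" "\<And>xs. length xs = m \<Longrightarrow> pr F G (hd xs) (tl xs) = H xs"
  shows "recfn m H"
  using recfn_cong[OF rf_prec_raw[OF assms(1,2)]] assms(3,4) by metis

lemma map_nth_len: "length xs = n \<Longrightarrow> map ((!) xs) [0..<n] = xs"
  using map_nth by blast

lemma upt_shift2b: "[2..<n+2] = map (\<lambda>i. i + 2) [0..<n]"
  using map_add_upt[of 2 n] by simp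

lemma upt_shift2: "[Suc (Suc 0)..<Suc (Suc n)] = map (\<lambda>i. Suc (Suc i)) [0..<n]"
  by (induction n) auto

lemma rf_sel:
  assumes "recfn m F" "length is = m" "\<forall>i\<in>set is. i < n"
  shows "recfn n (\<lambda>xs. F (map ((!) xs) is))"
proof -
  have "recfn n (\<lambda>xs. F (map (\<lambda>g. g xs) (map (\<lambda>i xs. xs ! i) is)))"
    by (rule rf_comp[OF assms(1)]) (use assms rf_proj in auto)
  then show ?thesis by (simp add: comp_def)
qed

lemma map_nth_self: "map ((!) xs) [0..<length xs] = xs"
  by (simp add: map_nth)

lemma rf_cons1:
  assumes "recfn (Suc n) F" "recfn n t"
  shows "recfn n (\<lambda>xs. F (t xs # xs))"
proof -
  have "recfn n (\<lambda>xs. F (map (\<lambda>g. g xs) (t # map (\<lambda>i xs. xs ! i) [0..<n])))"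
    by (rule rf_comp[OF assms(1)]) (use assms rf_proj in auto)
  then show ?thesis by (rule recfn_cong) (simp add: comp_def map_nth_len)
qed

lemma rf_add2: "recfn 2 (\<lambda>xs. xs!0 + xs!1)"
proof (rule rf_prec[of 1 "\<lambda>ys. ys!0" "\<lambda>zs. Suc (zs!0)"])
  show "recfn 1 (\<lambda>ys. ys!0)" by (rule rf_proj) simp
  show "Suc 1 = 2" by simp
  show "recfn (Suc (Suc 1)) (\<lambda>zs. Suc (zs!0))" by (rule rf_Suc, rule rf_proj) simp
  fix xs :: "nat list" assume "length xs = 2"
  then obtain a b where xs: "xs = [a,b]" using len2 by blast
  have "pr (\<lambda>ys. ys!0) (\<lambda>zs. Suc (zs!0)) a [b] = a + b" by (induction a) auto
  then show "pr (\<lambda>ys. ys!0) (\<lambda>zs. Suc (zs!0)) (hd xs) (tl xs) = xs!0 + xs!1" by (simp add: xs)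
qed

lemma rf_add: "recfn n g \<Longrightarrow> recfn n h \<Longrightarrow> recfn n (\<lambda>xs. g xs + h xs)"
  using rf_comp2[OF rf_add2] by simp

lemma rf_mult2: "recfn 2 (\<lambda>xs. xs!0 * xs!1)"
proof (rule rf_prec[of 1 "\<lambda>ys. 0" "\<lambda>zs. zs!0 + zs!2"])
  show "recfn 1 (\<lambda>ys. 0)" by (rule rf_zero)
  show "Suc 1 = 2" by simp
  show "recfn (Suc (Suc 1)) (\<lambda>zs. zs!0 + zs!2)" by (intro rf_add rf_proj) auto
  fix xs :: "nat list" assume "length xs = 2"
  then obtain a b where xs: "xs = [a,b]" using len2 by blast
  have "pr (\<lambda>ys. 0) (\<lambda>zs. zs!0 + zs!2) a [b] = a * b" by (induction a) auto
  then show "pr (\<lambda>ys. 0) (\<lambda>zs. zs!0 + zs!2) (hd xs) (tl xs) = xs!0 * xs!1" by (simp add: xs)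
qed

lemma rf_mult: "recfn n g \<Longrightarrow> recfn n h \<Longrightarrow> recfn n (\<lambda>xs. g xs * h xs)"
  using rf_comp2[OF rf_mult2] by simp

lemma rf_pred1: "recfn 1 (\<lambda>xs. xs!0 - 1)"
proof (rule rf_prec[of 0 "\<lambda>ys. 0" "\<lambda>zs. zs!1"])
  show "recfn 0 (\<lambda>ys. 0)" by (rule rf_zero)
  show "Suc 0 = 1" by simp
  show "recfn (Suc (Suc 0)) (\<lambda>zs. zs!1)" by (rule rf_proj) simp
  fix xs :: "nat list" assume "length xs = 1"
  then obtain a where xs: "xs = [a]" using len1[of xs] by auto
  show "pr (\<lambda>ys. 0) (\<lambda>zs. zs!1) (hd xs) (tl xs) = xs!0 - 1" by (cases a) (auto simp: xs)
qed

lemma rf_pred: "recfn n g \<Longrightarrow> recfn n (\<lambda>xs. g xs - 1)"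
  using rf_comp1[OF rf_pred1] by simp

lemma rf_sub2: "recfn 2 (\<lambda>xs. xs!1 - xs!0)"
proof (rule rf_prec[of 1 "\<lambda>ys. ys!0" "\<lambda>zs. zs!0 - 1"])
  show "recfn 1 (\<lambda>ys. ys!0)" by (rule rf_proj) simp
  show "Suc 1 = 2" by simp
  show "recfn (Suc (Suc 1)) (\<lambda>zs. zs!0 - 1)" by (intro rf_pred rf_proj) auto
  fix xs :: "nat list" assume "length xs = 2"
  then obtain a b where xs: "xs = [a,b]" using len2 by blast
  have "pr (\<lambda>ys. ys!0) (\<lambda>zs. zs!0 - 1) a [b] = b - a" by (induction a) auto
  then show "pr (\<lambda>ys. ys!0) (\<lambda>zs. zs!0 - 1) (hd xs) (tl xs) = xs!1 - xs!0" by (simp add: xs)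
qed

lemma rf_sub: "recfn n g \<Longrightarrow> recfn n h \<Longrightarrow> recfn n (\<lambda>xs. g xs - h xs)"
  using rf_comp2[OF rf_sub2, of n h g] by simp

definition rpred :: "nat \<Rightarrow> (nat list \<Rightarrow> bool) \<Rightarrow> bool" where
  "rpred n P \<longleftrightarrow> recfn n (\<lambda>xs. if P xs then 1 else 0)"

lemma rf_if:
  assumes "rpred n P" "recfn n a" "recfn n b"
  shows "recfn n (\<lambda>xs. if P xs then a xs else b xs)"
proof -
  have "recfn n (\<lambda>xs. (if P xs then 1 else 0) * a xs + (1 - (if P xs then 1 else 0)) * b xs)"
    using assms unfolding rpred_def by (intro rf_add rf_mult rf_sub rf_const) auto
  then show ?thesis by (rule recfn_cong) auto
qed

lemma rp_le: "recfn n g \<Longrightarrow> recfn n h \<Longrightarrow> rpred n (\<lambda>xs. g xs \<le> h xs)"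
  unfolding rpred_def
  by (rule recfn_cong[of n "\<lambda>xs. 1 - (g xs - h xs)"]) (auto intro: rf_sub rf_const)

lemma rp_not: "rpred n P \<Longrightarrow> rpred n (\<lambda>xs. \<not> P xs)"
  unfolding rpred_def
  by (rule recfn_cong[of n "\<lambda>xs. 1 - (if P xs then 1 else 0)"]) (auto intro: rf_sub rf_const)

lemma rp_and: "rpred n P \<Longrightarrow> rpred n Q \<Longrightarrow> rpred n (\<lambda>xs. P xs \<and> Q xs)"
  unfolding rpred_def
  by (rule recfn_cong[of n "\<lambda>xs. (if P xs then 1 else 0) * (if Q xs then 1 else 0)"]) (auto intro: rf_mult)

lemma rp_or: "rpred n P \<Longrightarrow> rpred n Q \<Longrightarrow> rpred n (\<lambda>xs. P xs \<or> Q xs)"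
  using rp_not[OF rp_and[OF rp_not rp_not]] by simp

lemma rp_less: "recfn n g \<Longrightarrow> recfn n h \<Longrightarrow> rpred n (\<lambda>xs. g xs < h xs)"
  using rp_not[OF rp_le[of n h g]] by (simp add: not_le)

lemma rp_eq: "recfn n g \<Longrightarrow> recfn n h \<Longrightarrow> rpred n (\<lambda>xs. g xs = h xs)"
  using rp_and[OF rp_le[of n g h] rp_le[of n h g]] by (simp add: order_eq_iff)

lemma rp_true: "rpred n (\<lambda>_. True)"
  unfolding rpred_def by (simp add: rf_const)

lemma rf_sum_raw:
  assumes "recfn (Suc n) F"
  shows "recfn (Suc n) (\<lambda>xs. \<Sum>t<hd xs. F (t # tl xs))"
proof (rule rf_prec[of n "\<lambda>ys. 0" "\<lambda>zs. zs!0 + F (map ((!) zs) [1..<n+2])", OF _ _ refl])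
  show "recfn n (\<lambda>ys. 0)" by (rule rf_zero)
  show "recfn (Suc (Suc n)) (\<lambda>zs. zs!0 + F (map ((!) zs) [1..<n+2]))"
    by (intro rf_add rf_proj rf_sel[OF assms]) auto
  fix xs :: "nat list" assume "length xs = Suc n"
  then obtain a ys where xs: "xs = a # ys" "length ys = n" by (cases xs) auto
  have "pr (\<lambda>ys. 0) (\<lambda>zs. zs!0 + F (map ((!) zs) [1..<n+2])) k ys = (\<Sum>t<k. F (t # ys))" for k
  proof (induction k)
    case (Suc k)
    have "map ((!) (v # k # ys)) [1..<n+2] = k # ys" for v
    proof -
      have "[1..<n+2] = 1 # map (\<lambda>i. i + 2) [0..<n]"
        using upt_shift2 by (simp add: upt_conv_Cons del: upt_Suc)
      then show ?thesis using xs(2) by (simp add: comp_def map_nth_len)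
    qed
    then show ?case using Suc by simp
  qed simp
  then show "pr (\<lambda>ys. 0) (\<lambda>zs. zs!0 + F (map ((!) zs) [1..<n+2])) (hd xs) (tl xs) = (\<Sum>t<hd xs. F (t # tl xs))"
    by (simp add: xs)
qed

lemma rf_sum:
  assumes "recfn (Suc n) F" "recfn n b"
  shows "recfn n (\<lambda>xs. \<Sum>t<b xs. F (t # xs))"
  using rf_cons1[OF rf_sum_raw[OF assms(1)] assms(2)] by simp

lemma rf_iter_raw:
  assumes "recfn (Suc n) F" "recfn n c0"
  shows "recfn (Suc n) (\<lambda>xs. ((\<lambda>y. F (y # tl xs)) ^^ hd xs) (c0 (tl xs)))"
proof (rule rf_prec[of n c0 "\<lambda>zs. F (map ((!) zs) (0 # [2..<n+2]))", OF _ _ refl])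
  show "recfn n c0" by fact
  show "recfn (Suc (Suc n)) (\<lambda>zs. F (map ((!) zs) (0 # [2..<n+2])))"
    by (intro rf_sel[OF assms(1)]) auto
  fix xs :: "nat list" assume "length xs = Suc n"
  then obtain a ys where xs: "xs = a # ys" "length ys = n" by (cases xs) auto
  have "pr c0 (\<lambda>zs. F (map ((!) zs) (0 # [2..<n+2]))) k ys = ((\<lambda>y. F (y # ys)) ^^ k) (c0 ys)" for k
  proof (induction k)
    case (Suc k)
    have "map ((!) (v # k # ys)) [2..<n+2] = ys" for v
    proof -
      have "[2..<n+2] = map (\<lambda>i. i + 2) [0..<n]"
        by (rule upt_shift2b)
      then show ?thesis using xs(2) by (simp add: comp_def map_nth_len)
    qed
    then show ?case using Suc by simp
  qed simp
  then show "pr c0 (\<lambda>zs. F (map ((!) zs) (0 # [2..<n+2]))) (hd xs) (tl xs) = ((\<lambda>y. F (y # tl xs)) ^^ hd xs) (c0 (tl xs))"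
    by (simp add: xs)
qed

lemma rf_iter:
  assumes "recfn (Suc n) F" "recfn n c0" "recfn n k"
  shows "recfn n (\<lambda>xs. ((\<lambda>y. F (y # xs)) ^^ k xs) (c0 xs))"
  using rf_cons1[OF rf_iter_raw[OF assms(1,2)] assms(3)] by simp

lemma rf_cons_sel:
  assumes "recfn (Suc n) F" "recfn m t" "length is = n" "\<forall>i\<in>set is. i < m"
  shows "recfn m (\<lambda>zs. F (t zs # map ((!) zs) is))"
proof -
  have "recfn m (\<lambda>zs. F (map (\<lambda>g. g zs) (t # map (\<lambda>i zs. zs ! i) is)))"
    by (rule rf_comp[OF assms(1)]) (use assms rf_proj in auto)
  then show ?thesis by (simp add: comp_def)
qed

lemma rf_cons2:
  assumes "recfn (Suc (Suc n)) F" "recfn n a" "recfn n b"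
  shows "recfn n (\<lambda>xs. F (a xs # b xs # xs))"
proof -
  have "recfn n (\<lambda>xs. F (map (\<lambda>g. g xs) (a # b # map (\<lambda>i xs. xs ! i) [0..<n])))"
    by (rule rf_comp[OF assms(1)]) (use assms rf_proj in auto)
  then show ?thesis by (rule recfn_cong) (simp add: comp_def map_nth_len)
qed

lemma rf_tl: assumes "recfn n g" shows "recfn (Suc n) (\<lambda>zs. g (tl zs))"
proof -
  have 1: "recfn (Suc n) (\<lambda>zs. g (map ((!) zs) (map Suc [0..<n])))"
    by (rule rf_sel[OF assms]) auto
  have 2: "map ((!) zs) (map Suc [0..<n]) = tl zs" if "length zs = Suc n" for zs :: "nat list"
    using that by (intro nth_equalityI) (auto simp: nth_tl)
  show ?thesis by (rule recfn_cong[OF 1]) (simp only: 2)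
qed

lemma rf_tri1: "recfn 1 (\<lambda>xs. triangle (xs!0))"
proof (rule rf_prec[of 0 "\<lambda>ys. 0" "\<lambda>zs. zs!0 + Suc (zs!1)"])
  show "recfn 0 (\<lambda>ys. 0)" by (rule rf_zero)
  show "recfn (Suc (Suc 0)) (\<lambda>zs. zs!0 + Suc (zs!1))" by (intro rf_add rf_Suc rf_proj) auto
  show "Suc 0 = 1" by simp
  fix xs :: "nat list" assume "length xs = 1"
  then obtain a where xs: "xs = [a]" using len1[of xs] by auto
  have "pr (\<lambda>ys. 0) (\<lambda>zs. zs!0 + Suc (zs!1)) a [] = triangle a" by (induction a) auto
  then show "pr (\<lambda>ys. 0) (\<lambda>zs. zs!0 + Suc (zs!1)) (hd xs) (tl xs) = triangle (xs!0)" by (simp add: xs)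
qed

lemma rf_tri: "recfn n g \<Longrightarrow> recfn n (\<lambda>xs. triangle (g xs))"
  using rf_comp1[OF rf_tri1] by simp

lemma rf_penc: "recfn n g \<Longrightarrow> recfn n h \<Longrightarrow> recfn n (\<lambda>xs. prod_encode (g xs, h xs))"
  unfolding prod_encode_def by (simp add: rf_add rf_tri)

lemma tri_mono: "m \<le> n \<Longrightarrow> triangle m \<le> triangle n"
  by (induction n) (auto simp: le_Suc_eq)

lemma le_tri: "k \<le> triangle k"
  by (induction k) auto

lemma tri_ex: "\<exists>k. triangle k \<le> z \<and> z < triangle (Suc k)"
proof (induction z)
  case 0 then show ?case by (intro exI[of _ 0]) auto
next
  case (Suc z)
  then obtain k where k: "triangle k \<le> z" "z < triangle (Suc k)" by blast
  show ?case
  proof (cases "Suc z < triangle (Suc k)")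
    case True then show ?thesis using k by (intro exI[of _ k]) auto
  next
    case False then show ?thesis using k by (intro exI[of _ "Suc k"]) auto
  qed
qed

definition dk :: "nat \<Rightarrow> nat" where
  "dk z = (\<Sum>t<z. if triangle (Suc t) \<le> z then 1 else 0)"

lemma sum_ind_less: "(\<Sum>t<z. if t < k then 1 else (0::nat)) = min z k"
  by (induction z) auto

lemma dk_eq: assumes "triangle k \<le> z" "z < triangle (Suc k)" shows "dk z = k"
proof -
  have "(if triangle (Suc t) \<le> z then 1 else (0::nat)) = (if t < k then 1 else 0)" for t
  proof -
    have "triangle (Suc t) \<le> z \<longleftrightarrow> t < k"
    proof
      assume "triangle (Suc t) \<le> z"
      then show "t < k" using assms tri_mono[of "Suc k" "Suc t"] by (metis not_less not_less_eq_eq order.strict_trans2)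
    next
      assume "t < k" then show "triangle (Suc t) \<le> z" using assms tri_mono[of "Suc t" k] by auto
    qed
    then show ?thesis by simp
  qed
  then have "dk z = min z k" unfolding dk_def using sum_ind_less by simp
  moreover have "k \<le> z" using le_tri[of k] assms by linarith
  ultimately show ?thesis by simp
qed

lemma prod_decode_dk: "prod_decode z = (z - triangle (dk z), dk z - (z - triangle (dk z)))"
proof -
  obtain k where k: "triangle k \<le> z" "z < triangle (Suc k)" using tri_ex by blast
  then have d: "dk z = k" by (rule dk_eq)
  have z: "z = triangle k + (z - triangle k)" using k by simp
  have "z - triangle k \<le> k" using k by simp
  then have "prod_decode (triangle k + (z - triangle k)) = (z - triangle k, k - (z - triangle k))"
    by (simp add: prod_decode_triangle_add prod_decode_aux.simps)
  then show ?thesis using z d by metis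
qed

lemma rf_dk: "recfn n g \<Longrightarrow> recfn n (\<lambda>xs. dk (g xs))"
proof -
  assume g: "recfn n g"
  have "recfn n (\<lambda>xs. \<Sum>t<g xs. (\<lambda>zs. if triangle (Suc (zs!0)) \<le> g (tl zs) then 1 else 0) (t # xs))"
  proof (rule rf_sum[OF _ g])
    have g': "recfn (Suc n) (\<lambda>zs. g (tl zs))" using g by (rule rf_tl)
    show "recfn (Suc n) (\<lambda>zs. if triangle (Suc (zs!0)) \<le> g (tl zs) then 1 else 0)"
      by (intro rf_if rp_le rf_tri rf_Suc rf_proj g' rf_const) auto
  qed
  then show ?thesis unfolding dk_def by simp
qed

lemma rf_pfst: "recfn n g \<Longrightarrow> recfn n (\<lambda>xs. fst (prod_decode (g xs)))"
  unfolding prod_decode_dk by (simp add: rf_sub rf_tri rf_dk)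
lemma rf_psnd: "recfn n g \<Longrightarrow> recfn n (\<lambda>xs. snd (prod_decode (g xs)))"
  unfolding prod_decode_dk by (simp add: rf_sub rf_tri rf_dk)

definition chd :: "nat \<Rightarrow> nat" where "chd c = fst (prod_decode (c - 1))"
definition ctl :: "nat \<Rightarrow> nat" where "ctl c = snd (prod_decode (c - 1))"
definition cnth :: "nat \<Rightarrow> nat \<Rightarrow> nat" where "cnth c i = chd ((ctl ^^ i) c)"
definition clen :: "nat \<Rightarrow> nat" where "clen c = (\<Sum>t<c. if (ctl ^^ t) c = 0 then 0 else 1)"

lemma prod_decode_0: "prod_decode 0 = (0, 0)"
  using prod_encode_inverse[of "(0,0)"] by (simp add: prod_encode_def)

lemma ctl_enc: "ctl (list_encode xs) = list_encode (tl xs)"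
  by (cases xs) (auto simp: ctl_def prod_decode_0)

lemma chd_enc: "xs \<noteq> [] \<Longrightarrow> chd (list_encode xs) = hd xs"
  by (cases xs) (auto simp: chd_def)

lemma ctl_iter: "(ctl ^^ i) (list_encode xs) = list_encode (drop i xs)"
  by (induction i) (auto simp: ctl_enc drop_Suc tl_drop)

lemma cnth_enc: "i < length xs \<Longrightarrow> cnth (list_encode xs) i = xs ! i"
  by (simp add: cnth_def ctl_iter chd_enc hd_drop_conv_nth)

lemma len_le_enc: "length xs \<le> list_encode xs"
proof (induction xs)
  case (Cons x xs) then show ?case using le_prod_encode_2[of "list_encode xs" x] by simp
qed simp

lemma enc_zero_iff: "list_encode xs = 0 \<longleftrightarrow> xs = []"
  by (metis list_encode.simps(1) list_encode_eq)

lemma clen_enc: "clen (list_encode xs) = length xs"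
proof -
  have "(if (ctl ^^ t) (list_encode xs) = 0 then 0 else (1::nat)) = (if t < length xs then 1 else 0)" for t
    by (simp add: ctl_iter enc_zero_iff)
  then have "clen (list_encode xs) = min (list_encode xs) (length xs)"
    unfolding clen_def using sum_ind_less by simp
  then show ?thesis using len_le_enc[of xs] by simp
qed

lemma rf_chd: "recfn n g \<Longrightarrow> recfn n (\<lambda>xs. chd (g xs))"
  unfolding chd_def by (intro rf_pfst rf_pred)
lemma rf_ctl: "recfn n g \<Longrightarrow> recfn n (\<lambda>xs. ctl (g xs))"
  unfolding ctl_def by (intro rf_psnd rf_pred)

lemma rf_ctl_iter: "recfn n i \<Longrightarrow> recfn n c \<Longrightarrow> recfn n (\<lambda>xs. (ctl ^^ i xs) (c xs))"
  using rf_iter[of n "\<lambda>zs. ctl (zs!0)" c i] rf_ctl[OF rf_proj[of 0 "Suc n"]] by simp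

lemma rf_cnth: "recfn n c \<Longrightarrow> recfn n i \<Longrightarrow> recfn n (\<lambda>xs. cnth (c xs) (i xs))"
  unfolding cnth_def by (intro rf_chd rf_ctl_iter)

lemma rf_clen: "recfn n c \<Longrightarrow> recfn n (\<lambda>xs. clen (c xs))"
proof -
  assume c: "recfn n c"
  have "recfn n (\<lambda>xs. \<Sum>t<c xs. (\<lambda>zs. if (ctl ^^ (zs!0)) (c (tl zs)) = 0 then 0 else 1) (t # xs))"
    by (rule rf_sum[OF _ c], intro rf_if rp_eq rf_ctl_iter rf_proj rf_tl c rf_const) auto
  then show ?thesis unfolding clen_def by simp
qed

fun encb :: "(nat \<Rightarrow> nat) \<Rightarrow> nat \<Rightarrow> nat \<Rightarrow> nat" where
  "encb F l 0 = 0"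
| "encb F l (Suc t) = Suc (prod_encode (F (l - Suc t), encb F l t))"

lemma encb_eq: "t \<le> l \<Longrightarrow> encb F l t = list_encode (map F [l - t..<l])"
proof (induction t)
  case (Suc t)
  then have "[l - Suc t..<l] = (l - Suc t) # [l - t..<l]"
    by (simp add: upt_conv_Cons Suc_diff_Suc)
  then show ?case using Suc by simp
qed simp

lemma rf_enc:
  assumes F: "recfn (Suc n) F" and L: "recfn n L"
  shows "recfn n (\<lambda>xs. list_encode (map (\<lambda>i. F (i # xs)) [0..<L xs]))"
proof -
  define G where "G = (\<lambda>zs::nat list. Suc (prod_encode (F ((zs!2 - Suc (zs!1)) # map ((!) zs) [3..<n+3]), zs!0)))"
  have G: "recfn (Suc (Suc (Suc n))) G"
    unfolding G_def by (intro rf_Suc rf_penc rf_cons_sel[OF F] rf_sub rf_proj) auto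
  have E: "recfn (Suc (Suc n)) (\<lambda>xs. pr (\<lambda>_. 0) G (hd xs) (tl xs))"
    by (rule rf_prec_raw[OF rf_zero G])
  have step: "pr (\<lambda>_. 0) G t (l # ys) = encb (\<lambda>i. F (i # ys)) l t" if "length ys = n" for t l ys
  proof (induction t)
    case (Suc t)
    have "map ((!) (v # t # l # ys)) [3..<n+3] = ys" for v
    proof -
      have "[3..<n+3] = map (\<lambda>i. i + 3) [0..<n]" using map_add_upt[of 3 n] by simp
      then show ?thesis using that by (simp add: comp_def map_nth_len numeral_3_eq_3)
    qed
    then show ?case using Suc by (simp add: G_def)
  qed simp
  have "recfn n (\<lambda>xs. pr (\<lambda>_. 0) G (hd (L xs # L xs # xs)) (tl (L xs # L xs # xs)))"
    by (rule rf_cons2[OF E L L])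
  then show ?thesis
    by (rule recfn_cong) (simp add: step encb_eq)
qed

lemma total_rec2_iff: "total_rec2 h \<longleftrightarrow> recfn 2 (\<lambda>xs. h (xs!0) (xs!1))"
  unfolding total_rec2_def recfn_def
proof (intro iffI; elim exE; intro exI allI impI)
  fix c and xs :: "nat list" assume "\<forall>x y. eval c [x, y] (h x y)" "length xs = (2::nat)"
  then show "eval c xs (h (xs!0) (xs!1))" using len2[of xs] by metis
next
  fix c x y assume "\<forall>xs. length xs = 2 \<longrightarrow> eval c xs (h (xs!0) (xs!1))"
  then show "eval c [x, y] (h x y)" by (metis nth_Cons_0 nth_Cons_Suc One_nat_def length_Cons list.size(3) numeral_2_eq_2)
qed

lemma rf_h: "total_rec2 h \<Longrightarrow> recfn n a \<Longrightarrow> recfn n b \<Longrightarrow> recfn n (\<lambda>xs. h (a xs) (b xs))"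
  using rf_comp2[of "\<lambda>xs. h (xs!0) (xs!1)" n a b] total_rec2_iff by simp

lemma tr2_intro: assumes "recfn 2 F" "\<And>x y. F [x,y] = h x y" shows "total_rec2 h"
  unfolding total_rec2_iff
proof (rule recfn_cong[OF assms(1)])
  fix xs :: "nat list" assume "length xs = 2"
  then have "xs = [xs!0, xs!1]" by (rule len2)
  then show "F xs = h (xs!0) (xs!1)" using assms(2) by metis
qed

definition cnt :: "(nat \<Rightarrow> nat) \<Rightarrow> nat \<Rightarrow> nat" where
  "cnt f t = (\<Sum>i<t. if f i = 0 then 0 else 1)"

definition knzi :: "(nat \<Rightarrow> nat) \<Rightarrow> nat \<Rightarrow> nat \<Rightarrow> nat" where
  "knzi f B k = (\<Sum>t<B. if f t \<noteq> 0 \<and> cnt f t = k then Suc t else 0)"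

lemma cnt_mono: "t \<le> t' \<Longrightarrow> cnt f t \<le> cnt f t'"
  unfolding cnt_def by (rule sum_mono2) auto

lemma cnt_Suc: "cnt f (Suc t) = cnt f t + (if f t = 0 then 0 else 1)"
  unfolding cnt_def by simp

lemma cnt_uniq: assumes "f t \<noteq> 0" "cnt f t = k" "f t' \<noteq> 0" "cnt f t' = k" shows "t = t'"
proof (rule ccontr)
  assume "t \<noteq> t'"
  then consider "t < t'" | "t' < t" by linarith
  then show False
  proof cases
    case 1
    then have "cnt f (Suc t) \<le> cnt f t'" by (intro cnt_mono) auto
    then show False using assms cnt_Suc[of f t] by simp
  next
    case 2
    then have "cnt f (Suc t') \<le> cnt f t" by (intro cnt_mono) auto
    then show False using assms cnt_Suc[of f t'] by simp
  qed
qed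

lemma knzi_found: assumes "t < B" "f t \<noteq> 0" "cnt f t = k" shows "knzi f B k = Suc t"
proof -
  have eq: "(if f t' \<noteq> 0 \<and> cnt f t' = k then Suc t' else 0) = (if t' = t then Suc t else 0)" for t'
  proof (cases "f t' \<noteq> 0 \<and> cnt f t' = k")
    case True then have "t' = t" using cnt_uniq[of f t' k t] assms(2,3) by blast
    then show ?thesis using True by simp
  next
    case False
    then have "t' \<noteq> t" using assms(2,3) by blast
    then show ?thesis using False by simp
  qed
  have "knzi f B k = (\<Sum>t'<B. if t' = t then Suc t else 0)"
    unfolding knzi_def by (simp only: eq)
  also have "\<dots> = Suc t" using assms(1) by (simp add: sum.delta')
  finally show ?thesis .
qed

lemma knzi_none: assumes "\<forall>t<B. \<not> (f t \<noteq> 0 \<and> cnt f t = k)" shows "knzi f B k = 0"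
  unfolding knzi_def
proof (rule sum.neutral, rule ballI)
  fix t assume "t \<in> {..<B}"
  then have "\<not> (f t \<noteq> 0 \<and> cnt f t = k)" using assms by blast
  then show "(if f t \<noteq> 0 \<and> cnt f t = k then Suc t else 0) = 0" by (simp only: if_False)
qed

lemma knzi_cases:
  "(knzi f B k = 0 \<and> (\<forall>t<B. \<not> (f t \<noteq> 0 \<and> cnt f t = k))) \<or> (\<exists>t<B. f t \<noteq> 0 \<and> cnt f t = k \<and> knzi f B k = Suc t)"
proof (cases "\<exists>t<B. f t \<noteq> 0 \<and> cnt f t = k")
  case True
  then obtain t where "t < B" "f t \<noteq> 0" "cnt f t = k" by blast
  then show ?thesis using knzi_found[of t B f k] by blast
next
  case False
  then show ?thesis using knzi_none[of B f k] by blast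
qed

lemma cnt_agree: "(\<And>i. i < t \<Longrightarrow> f i = g i) \<Longrightarrow> cnt f t = cnt g t"
  unfolding cnt_def by (rule sum.cong) auto

lemma cnt_card: "cnt f t = card {i\<in>nzset f. i < t}"
proof -
  have "cnt f t = card {i. i < t \<and> f i \<noteq> 0}"
    unfolding cnt_def by (simp add: sum.If_cases Int_def conj_commute)
  then show ?thesis by (simp add: nzset_def conj_commute)
qed

lemma enum_below: fixes S :: "nat set" assumes "infinite S" shows "{i\<in>S. i < enumerate S n} = enumerate S ` {..<n}"
proof
  show "{i\<in>S. i < enumerate S n} \<subseteq> enumerate S ` {..<n}"
  proof
    fix i assume "i \<in> {i\<in>S. i < enumerate S n}"
    then have i: "i \<in> S" "i < enumerate S n" by auto
    obtain k where k: "enumerate S k = i" using enumerate_Ex[OF assms i(1)] by blast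
    have "enumerate S k < enumerate S n" using k i(2) by simp
    then have "k < n" using enumerate_mono_iff[OF assms] by blast
    then show "i \<in> enumerate S ` {..<n}" using k by auto
  qed
  show "enumerate S ` {..<n} \<subseteq> {i\<in>S. i < enumerate S n}"
    using assms by (auto intro: enumerate_in_set)
qed

lemma card_enum_below: fixes S :: "nat set" assumes "infinite S" shows "card {i\<in>S. i < enumerate S n} = n"
proof -
  have "inj_on (enumerate S) {..<n}" using inj_on_subset[OF inj_enumerate[OF assms] subset_UNIV] .
  then show ?thesis using enum_below[OF assms, of n] by (simp add: card_image)
qed

lemma cnt_enum: "infinite (nzset f) \<Longrightarrow> cnt f (enumerate (nzset f) n) = n"
  by (simp add: cnt_card card_enum_below)

lemma enum_nz: "infinite (nzset f) \<Longrightarrow> f (enumerate (nzset f) n) \<noteq> 0"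
  using enumerate_in_set[of "nzset f" n] by (simp add: nzset_def)

lemma nz_cnt_is_enum: assumes "infinite (nzset f)" "f t \<noteq> 0" "cnt f t = k"
  shows "t = enumerate (nzset f) k"
  using cnt_uniq[OF assms(2,3) enum_nz[OF assms(1)] cnt_enum[OF assms(1)]] .

lemma enum_lt_cnt: assumes "infinite (nzset f)" "k < cnt f B" shows "enumerate (nzset f) k < B"
proof (rule ccontr)
  assume "\<not> ?thesis"
  then have "cnt f B \<le> cnt f (enumerate (nzset f) k)" by (intro cnt_mono) simp
  then show False using assms cnt_enum by simp
qed

lemma cnt_unbounded: assumes "infinite (nzset f)" shows "\<exists>B. k \<le> cnt f B"
  by (rule exI[of _ "enumerate (nzset f) k"]) (simp add: cnt_enum assms)

lemma rf_cnt: "recfn (Suc n) F \<Longrightarrow> recfn n B \<Longrightarrow> recfn n (\<lambda>xs. cnt (\<lambda>i. F (i # xs)) (B xs))"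
  unfolding cnt_def by (intro rf_sum rf_if rp_eq rf_const) auto

lemma rf_drop1:
  assumes "recfn (Suc n) F" shows "recfn (Suc (Suc n)) (\<lambda>zs. F (zs!0 # tl (tl zs)))"
proof -
  have 1: "recfn (Suc (Suc n)) (\<lambda>zs. F ((\<lambda>zs. zs!0) zs # map ((!) zs) (map (\<lambda>i. i + 2) [0..<n])))"
    by (rule rf_cons_sel[OF assms rf_proj]) auto
  have 2: "map ((!) zs) (map (\<lambda>i. i + 2) [0..<n]) = tl (tl zs)" if "length zs = Suc (Suc n)" for zs :: "nat list"
    using that by (intro nth_equalityI) (auto simp: nth_tl)
  show ?thesis by (rule recfn_cong[OF 1]) (simp only: 2)
qed

lemma rf_knzi:
  assumes F: "recfn (Suc n) F" and B: "recfn n B" and k: "recfn n k"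
  shows "recfn n (\<lambda>xs. knzi (\<lambda>i. F (i # xs)) (B xs) (k xs))"
proof -
  have c: "recfn (Suc n) (\<lambda>ys. cnt (\<lambda>i. F (i # tl ys)) (ys!0))"
    using rf_cnt[OF rf_drop1[OF F] rf_proj[of 0 "Suc n"]] by simp
  have k': "recfn (Suc n) (\<lambda>ys. k (tl ys))" by (rule rf_tl[OF k])
  have "recfn n (\<lambda>xs. \<Sum>t<B xs. (\<lambda>ys. if F ys \<noteq> 0 \<and> cnt (\<lambda>i. F (i # tl ys)) (ys!0) = k (tl ys) then Suc (ys!0) else 0) (t # xs))"
    by (rule rf_sum[OF _ B]) (intro rf_if rp_and rp_not rp_eq F c k' rf_Suc rf_proj rf_const; simp)
  then show ?thesis unfolding knzi_def by (rule recfn_cong) (simp only: nth_Cons_0 list.sel(3))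
qed

definition assoc :: "(nat \<Rightarrow> nat \<Rightarrow> nat) \<Rightarrow> (baire \<Rightarrow> baire option) \<Rightarrow> bool" where
  "assoc h F \<longleftrightarrow> (\<forall>p q. F p = Some q \<longrightarrow>
        (\<forall>n. (\<exists>m. h (pref p m) n \<noteq> 0) \<and> (\<forall>m. h (pref p m) n \<noteq> 0 \<longrightarrow> h (pref p m) n = Suc (q n))))"

lemma computable_iff: "computable F \<longleftrightarrow> (\<exists>h. total_rec2 h \<and> assoc h F)"
  unfolding computable_def assoc_def by blast

definition mono_h :: "(nat \<Rightarrow> nat \<Rightarrow> nat) \<Rightarrow> bool" where
  "mono_h h \<longleftrightarrow> (\<forall>p m m' n. m \<le> m' \<longrightarrow> h (pref p m) n \<noteq> 0 \<longrightarrow> h (pref p m') n = h (pref p m) n)"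

lemma cnth_pref: "i < m \<Longrightarrow> cnth (pref p m) i = p i"
  unfolding pref_def by (simp add: cnth_enc)

lemma clen_pref: "clen (pref p m) = m"
  unfolding pref_def by (simp add: clen_enc)

lemma pref_ge: "m \<le> pref p m"
  unfolding pref_def using len_le_enc[of "map p [0..<m]"] by simp

definition pc :: "nat \<Rightarrow> nat \<Rightarrow> nat" where
  "pc c j = list_encode (map (cnth c) [0..<j])"

lemma pc_pref: "j \<le> m \<Longrightarrow> pc (pref p m) j = pref p j"
  unfolding pc_def pref_def[of p j]
  by (rule arg_cong[where f=list_encode], rule map_cong) (auto simp: cnth_pref)

lemma pref_eqI: "(\<And>i. i < m \<Longrightarrow> p i = p' i) \<Longrightarrow> pref p m = pref p' m"
  unfolding pref_def by (rule arg_cong[where f=list_encode], rule map_cong) auto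

definition hm :: "(nat \<Rightarrow> nat \<Rightarrow> nat) \<Rightarrow> nat \<Rightarrow> nat \<Rightarrow> nat" where
  "hm h c n = (let t = knzi (\<lambda>j. h (pc c j) n) (Suc (clen c)) 0 in if t = 0 then 0 else h (pc c (t - 1)) n)"

lemma hm_rec: assumes "total_rec2 h" shows "total_rec2 (hm h)"
proof -
  define G where "G = (\<lambda>ys::nat list. h (list_encode (map (\<lambda>i. cnth (ys!1) i) [0..<ys!0])) (ys!2))"
  have G: "recfn 3 G"
  proof -
    have "recfn 3 (\<lambda>ys. list_encode (map (\<lambda>i. (\<lambda>zs. cnth (zs!2) (zs!0)) (i # ys)) [0..<ys!0]))"
      by (rule rf_enc) (intro rf_cnth rf_proj; simp)+
    then show ?thesis unfolding G_def by (intro rf_h[OF assms] rf_proj) simp_all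
  qed
  have K: "recfn 2 (\<lambda>xs. knzi (\<lambda>j. G (j # xs)) (Suc (clen (xs!0))) 0)"
    using G by (intro rf_knzi rf_Suc rf_clen rf_proj rf_const) (simp_all add: numeral_3_eq_3)
  have "recfn 2 (\<lambda>xs. if knzi (\<lambda>j. G (j # xs)) (Suc (clen (xs!0))) 0 = 0 then 0
          else G ((knzi (\<lambda>j. G (j # xs)) (Suc (clen (xs!0))) 0 - 1) # xs))"
    using G by (intro rf_if rp_eq K rf_const rf_cons1[of 2 G] rf_pred) (simp_all add: numeral_3_eq_3)
  then show ?thesis
    by (rule tr2_intro) (simp add: hm_def G_def pc_def Let_def)
qed

lemma hm_pref:
  assumes "j0 \<le> m" "h (pref p j0) n \<noteq> 0" "\<forall>j<j0. h (pref p j) n = 0"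
  shows "hm h (pref p m) n = h (pref p j0) n"
proof -
  let ?g = "\<lambda>j. h (pc (pref p m) j) n"
  have g: "?g j = h (pref p j) n" if "j \<le> m" for j using that pc_pref by simp
  have c: "cnt ?g j0 = 0" unfolding cnt_def using assms g by (intro sum.neutral) auto
  have "knzi ?g (Suc (clen (pref p m))) 0 = Suc j0"
    using assms g c by (intro knzi_found) (auto simp: clen_pref)
  then show ?thesis unfolding hm_def using g assms by simp
qed

lemma hm_nz:
  assumes "hm h (pref p m) n \<noteq> 0"
  shows "\<exists>j0\<le>m. h (pref p j0) n \<noteq> 0 \<and> (\<forall>j<j0. h (pref p j) n = 0) \<and> hm h (pref p m) n = h (pref p j0) n"
proof -
  let ?g = "\<lambda>j. h (pc (pref p m) j) n"
  have g: "?g j = h (pref p j) n" if "j \<le> m" for j using that pc_pref by simp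
  from knzi_cases[of ?g "Suc (clen (pref p m))" 0] assms obtain t where
    t: "t < Suc m" "?g t \<noteq> 0" "cnt ?g t = 0" "knzi ?g (Suc (clen (pref p m))) 0 = Suc t"
    unfolding hm_def by (auto simp: clen_pref Let_def split: if_splits)
  have z: "\<forall>j<t. h (pref p j) n = 0"
  proof (intro allI impI)
    fix j assume "j < t"
    have "cnt ?g (Suc j) \<le> cnt ?g t" using \<open>j < t\<close> by (intro cnt_mono) simp
    then have "?g j = 0" using t(3) cnt_Suc[of ?g j] by (simp split: if_splits)
    then show "h (pref p j) n = 0" using g \<open>j < t\<close> t(1) by simp
  qed
  show ?thesis using t g z by (intro exI[of _ t]) (auto simp: hm_def Let_def)
qed

lemma mono_exists:
  assumes "computable F"
  shows "\<exists>h. total_rec2 h \<and> assoc h F \<and> mono_h h"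
proof -
  obtain h where h: "total_rec2 h" "assoc h F" using assms computable_iff by blast
  have "assoc (hm h) F"
    unfolding assoc_def
  proof (intro allI impI conjI)
    fix p q n assume F: "F p = Some q"
    obtain m0 where m0: "h (pref p m0) n \<noteq> 0" using h(2) F unfolding assoc_def by blast
    define j0 where "j0 = (LEAST j. h (pref p j) n \<noteq> 0)"
    have j0: "h (pref p j0) n \<noteq> 0" "j0 \<le> m0" "\<forall>j<j0. h (pref p j) n = 0"
      unfolding j0_def using m0 by (auto intro: LeastI Least_le dest: not_less_Least)
    show "\<exists>m. hm h (pref p m) n \<noteq> 0"
      using hm_pref[of j0 m0 h p n] j0 by (intro exI[of _ m0]) simp
    fix m assume "hm h (pref p m) n \<noteq> 0"
    then show "hm h (pref p m) n = Suc (q n)"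
    proof -
      assume "hm h (pref p m) n \<noteq> 0"
      then obtain j where "h (pref p j) n \<noteq> 0" "hm h (pref p m) n = h (pref p j) n" using hm_nz by blast
      then show "hm h (pref p m) n = Suc (q n)" using h(2) F unfolding assoc_def by metis
    qed
  qed
  moreover have "mono_h (hm h)"
    unfolding mono_h_def
  proof (intro allI impI)
    fix p m m' n assume mm: "m \<le> m'" "hm h (pref p m) n \<noteq> 0"
    then obtain j where j: "j \<le> m" "h (pref p j) n \<noteq> 0" "\<forall>i<j. h (pref p i) n = 0" "hm h (pref p m) n = h (pref p j) n"
      using hm_nz by blast
    then show "hm h (pref p m') n = hm h (pref p m) n" using hm_pref[of j m' h p n] mm by simp
  qed
  ultimately show ?thesis using hm_rec[OF h(1)] by blast
qed

lemma comp_input: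
  assumes F: "computable F" and T: "recfn 1 (\<lambda>xs. T (xs!0))"
    and Tp: "\<And>p m. D p \<Longrightarrow> T (pref p m) = pref (\<phi> p) (ell p m)"
    and unb: "\<And>p L. D p \<Longrightarrow> \<exists>m. L \<le> ell p m"
  shows "computable (\<lambda>p. if D p then F (\<phi> p) else None)"
proof -
  obtain h where h: "total_rec2 h" "assoc h F" "mono_h h" using mono_exists[OF F] by blast
  have tr: "total_rec2 (\<lambda>x y. h (T x) y)"
  proof (rule tr2_intro)
    show "recfn 2 (\<lambda>xs. h (T (xs!0)) (xs!1))"
      by (intro rf_h[OF h(1)] rf_comp1[OF T, of 2 "\<lambda>xs. xs!0", simplified] rf_proj) simp_all
  qed simp
  have "assoc (\<lambda>x y. h (T x) y) (\<lambda>p. if D p then F (\<phi> p) else None)"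
    unfolding assoc_def
  proof (intro allI impI conjI)
    fix p q n assume a: "(if D p then F (\<phi> p) else None) = Some q"
    then have D: "D p" and Fq: "F (\<phi> p) = Some q" by (auto split: if_splits)
    obtain M where M: "h (pref (\<phi> p) M) n \<noteq> 0" using h(2) Fq unfolding assoc_def by blast
    obtain m where m: "M \<le> ell p m" using unb[OF D] by blast
    have "h (pref (\<phi> p) (ell p m)) n \<noteq> 0" using h(3) M m unfolding mono_h_def by metis
    then show "\<exists>m. h (T (pref p m)) n \<noteq> 0" using Tp[OF D] by metis
    fix m assume "h (T (pref p m)) n \<noteq> 0"
    then show "h (T (pref p m)) n = Suc (q n)" using Tp[OF D] h(2) Fq unfolding assoc_def by metis
  qed
  then show ?thesis using tr computable_iff by blast
qed

lemma comp_outsuc: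
  assumes F: "computable F"
  shows "computable (\<lambda>p. map_option (\<lambda>q i. Suc (q i)) (F p))"
proof -
  obtain h where h: "total_rec2 h" "assoc h F" using F computable_iff by blast
  have tr: "total_rec2 (\<lambda>x y. if h x y = 0 then 0 else Suc (h x y))"
  proof (rule tr2_intro)
    show "recfn 2 (\<lambda>xs. if h (xs!0) (xs!1) = 0 then 0 else Suc (h (xs!0) (xs!1)))"
      by (intro rf_if rp_eq rf_h[OF h(1)] rf_proj rf_const rf_Suc) simp_all
  qed simp
  have "assoc (\<lambda>x y. if h x y = 0 then 0 else Suc (h x y)) (\<lambda>p. map_option (\<lambda>q i. Suc (q i)) (F p))"
    using h(2) unfolding assoc_def by auto
  then show ?thesis using tr computable_iff by blast
qed

definition om1 :: "(nat \<Rightarrow> nat \<Rightarrow> nat) \<Rightarrow> nat \<Rightarrow> nat \<Rightarrow> nat" where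
  "om1 h c n = (let t = knzi (\<lambda>i. h c i - 1) c n in
     if t \<noteq> 0 \<and> cnt (\<lambda>i. if h c i = 0 then 1 else 0) t = 0 then h c (t - 1) - 1 else 0)"

lemma cnt_zero_iff: "cnt g t = 0 \<longleftrightarrow> (\<forall>i<t. g i = 0)"
  unfolding cnt_def by (auto split: if_splits)

lemma om1_rec: assumes "total_rec2 h" shows "total_rec2 (om1 h)"
proof -
  define Fm where "Fm = (\<lambda>zs::nat list. h (zs!1) (zs!0) - 1)"
  define Zm where "Zm = (\<lambda>zs::nat list. if h (zs!1) (zs!0) = 0 then 1 else (0::nat))"
  have Fm: "recfn 3 Fm" unfolding Fm_def by (intro rf_pred rf_h[OF assms] rf_proj) simp_all
  have Zm: "recfn 3 Zm" unfolding Zm_def by (intro rf_if rp_eq rf_h[OF assms] rf_proj rf_const) simp_all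
  have t: "recfn 2 (\<lambda>xs. knzi (\<lambda>i. Fm (i # xs)) (xs!0) (xs!1))"
    using Fm by (intro rf_knzi rf_proj) (simp_all add: numeral_3_eq_3)
  have z: "recfn 2 (\<lambda>xs. cnt (\<lambda>i. Zm (i # xs)) (knzi (\<lambda>i. Fm (i # xs)) (xs!0) (xs!1)))"
    using Zm t by (intro rf_cnt) (simp_all add: numeral_3_eq_3)
  have "recfn 2 (\<lambda>xs. if knzi (\<lambda>i. Fm (i # xs)) (xs!0) (xs!1) \<noteq> 0 \<and> cnt (\<lambda>i. Zm (i # xs)) (knzi (\<lambda>i. Fm (i # xs)) (xs!0) (xs!1)) = 0
      then h (xs!0) (knzi (\<lambda>i. Fm (i # xs)) (xs!0) (xs!1) - 1) - 1 else 0)"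
    by (intro rf_if rp_and rp_not rp_eq t z rf_const rf_pred rf_h[OF assms] rf_proj) simp_all
  then show ?thesis by (rule tr2_intro) (simp add: om1_def Fm_def Zm_def Let_def)
qed

lemma uniform_m:
  assumes "assoc h F" "mono_h h" "F p = Some q"
  shows "\<exists>m. \<forall>i<k. h (pref p m) i \<noteq> 0"
proof (induction k)
  case 0 then show ?case by simp
next
  case (Suc k)
  then obtain m where m: "\<forall>i<k. h (pref p m) i \<noteq> 0" by blast
  obtain m' where m': "h (pref p m') k \<noteq> 0" using assms unfolding assoc_def by blast
  have "\<forall>i<Suc k. h (pref p (max m m')) i \<noteq> 0"
  proof (intro allI impI)
    fix i assume "i < Suc k"
    then consider "i < k" | "i = k" by linarith
    then show "h (pref p (max m m')) i \<noteq> 0"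
    proof cases
      case 1 then show ?thesis using m assms(2) unfolding mono_h_def by (metis max.cobounded1)
    next
      case 2 then show ?thesis using m' assms(2) unfolding mono_h_def by (metis max.cobounded2)
    qed
  qed
  then show ?case by blast
qed

lemma comp_outminus1:
  assumes F: "computable F"
  shows "computable (\<lambda>p. case F p of None \<Rightarrow> None | Some q \<Rightarrow> if infinite (nzset q) then Some (minus1 q) else None)"
proof -
  obtain h where h: "total_rec2 h" "assoc h F" "mono_h h" using mono_exists[OF F] by blast
  have val: "h (pref p m) i = Suc (q i)" if "F p = Some q" "h (pref p m) i \<noteq> 0" for p q m i
    using h(2) that unfolding assoc_def by blast
  have "assoc (om1 h) (\<lambda>p. case F p of None \<Rightarrow> None | Some q \<Rightarrow> if infinite (nzset q) then Some (minus1 q) else None)"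
    unfolding assoc_def
  proof (intro allI impI conjI)
    fix p q' n assume a: "(case F p of None \<Rightarrow> None | Some q \<Rightarrow> if infinite (nzset q) then Some (minus1 q) else None) = Some q'"
    then obtain q where Fq: "F p = Some q" and inf: "infinite (nzset q)" and q': "q' = minus1 q"
      by (auto split: option.splits if_splits)
    define e where "e = enumerate (nzset q) n"
    have qe: "q e \<noteq> 0" unfolding e_def by (rule enum_nz[OF inf])
    have ce: "cnt q e = n" unfolding e_def by (rule cnt_enum[OF inf])
    have resv: "Suc (q' n) = q e" using qe by (simp add: q' minus1_def e_def)
    obtain m0 where m0: "\<forall>i<Suc e. h (pref p m0) i \<noteq> 0" using uniform_m[OF h(2,3) Fq] by blast
    define m where "m = max m0 (Suc e)"
    have mall: "\<forall>i<Suc e. h (pref p m) i \<noteq> 0"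
      using m0 h(3) unfolding mono_h_def m_def by (metis max.cobounded1)
    let ?c = "pref p m"
    have hc: "h ?c i = Suc (q i)" if "i \<le> e" for i using mall that val[OF Fq] by auto
    have ec: "e < ?c" using pref_ge[of m p] unfolding m_def by linarith
    have fe: "h ?c e - 1 \<noteq> 0" using hc qe by simp
    have cf: "cnt (\<lambda>i. h ?c i - 1) e = n" using ce hc by (subst cnt_agree[of e _ q]) auto
    have kn: "knzi (\<lambda>i. h ?c i - 1) ?c n = Suc e" by (rule knzi_found[OF ec fe cf])
    have known: "cnt (\<lambda>i. if h ?c i = 0 then 1 else 0) (Suc e) = 0"
      using mall unfolding cnt_zero_iff by auto
    have "om1 h ?c n = Suc (q' n)" unfolding om1_def Let_def kn using known hc resv by simp
    then show "\<exists>m. om1 h (pref p m) n \<noteq> 0" by (intro exI[of _ m]) simp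
  next
    fix p q' n m assume a: "(case F p of None \<Rightarrow> None | Some q \<Rightarrow> if infinite (nzset q) then Some (minus1 q) else None) = Some q'"
      and nz: "om1 h (pref p m) n \<noteq> 0"
    then obtain q where Fq: "F p = Some q" and inf: "infinite (nzset q)" and q': "q' = minus1 q"
      by (auto split: option.splits if_splits)
    let ?c = "pref p m"
    let ?t = "knzi (\<lambda>i. h ?c i - 1) ?c n"
    have tk: "?t \<noteq> 0" "cnt (\<lambda>i. if h ?c i = 0 then 1 else 0) ?t = 0" and ov: "om1 h ?c n = h ?c (?t - 1) - 1"
      using nz unfolding om1_def Let_def by (auto split: if_splits)
    from knzi_cases[of "\<lambda>i. h ?c i - 1" ?c n] tk(1) obtain e where
      e: "h ?c e - 1 \<noteq> 0" "cnt (\<lambda>i. h ?c i - 1) e = n" "?t = Suc e" by auto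
    have allk: "\<forall>i<Suc e. h ?c i \<noteq> 0"
    proof (intro allI impI)
      fix i assume "i < Suc e"
      then have "(if h ?c i = 0 then 1 else (0::nat)) = 0" using tk(2) e(3) unfolding cnt_zero_iff by simp
      then show "h ?c i \<noteq> 0" by (simp split: if_splits)
    qed
    have hc: "h ?c i = Suc (q i)" if "i \<le> e" for i using allk that val[OF Fq] by auto
    have qe: "q e \<noteq> 0" using e(1) hc by simp
    have ce: "cnt q e = n" using e(2) hc by (subst (asm) cnt_agree[of e _ q]) auto
    have "e = enumerate (nzset q) n" by (rule nz_cnt_is_enum[OF inf qe ce])
    then have "Suc (q' n) = q e" using qe by (simp add: q' minus1_def)
    then show "om1 h ?c n = Suc (q' n)" using ov e(3) hc by simp
  qed
  then show ?thesis using om1_rec[OF h(1)] computable_iff by blast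
qed

lemma rf_mod2_1: "recfn 1 (\<lambda>xs. xs!0 mod 2)"
proof (rule rf_prec[of 0 "\<lambda>ys. 0" "\<lambda>zs. 1 - zs!0"])
  show "recfn 0 (\<lambda>ys. 0)" by (rule rf_zero)
  show "recfn (Suc (Suc 0)) (\<lambda>zs. 1 - zs!0)" by (intro rf_sub rf_const rf_proj) simp
  show "Suc 0 = 1" by simp
  fix xs :: "nat list" assume "length xs = 1"
  then obtain a where xs: "xs = [a]" using len1[of xs] by auto
  have "pr (\<lambda>ys. 0) (\<lambda>zs. 1 - zs!0) a [] = a mod 2" by (induction a) (auto simp: mod_Suc)
  then show "pr (\<lambda>ys. 0) (\<lambda>zs. 1 - zs!0) (hd xs) (tl xs) = xs!0 mod 2" by (simp add: xs)
qed

lemma rf_mod2: "recfn n g \<Longrightarrow> recfn n (\<lambda>xs. g xs mod 2)"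
  using rf_comp1[OF rf_mod2_1] by simp

lemma rf_div2_1: "recfn 1 (\<lambda>xs. xs!0 div 2)"
proof (rule rf_prec[of 0 "\<lambda>ys. 0" "\<lambda>zs. zs!0 + zs!1 mod 2"])
  show "recfn 0 (\<lambda>ys. 0)" by (rule rf_zero)
  show "recfn (Suc (Suc 0)) (\<lambda>zs. zs!0 + zs!1 mod 2)" by (intro rf_add rf_mod2 rf_proj) simp_all
  show "Suc 0 = 1" by simp
  fix xs :: "nat list" assume "length xs = 1"
  then obtain a where xs: "xs = [a]" using len1[of xs] by auto
  have "pr (\<lambda>ys. 0) (\<lambda>zs. zs!0 + zs!1 mod 2) a [] = a div 2" by (induction a) (simp_all, presburger)
  then show "pr (\<lambda>ys. 0) (\<lambda>zs. zs!0 + zs!1 mod 2) (hd xs) (tl xs) = xs!0 div 2" by (simp add: xs)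
qed

lemma rf_div2: "recfn n g \<Longrightarrow> recfn n (\<lambda>xs. g xs div 2)"
  using rf_comp1[OF rf_div2_1] by simp

lemma rf_app2: "recfn 2 (\<lambda>xs. f (xs!0) (xs!1)) \<Longrightarrow> recfn n g \<Longrightarrow> recfn n h \<Longrightarrow> recfn n (\<lambda>xs. f (g xs) (h xs))"
  using rf_comp2[of "\<lambda>xs. f (xs!0) (xs!1)" n g h] by simp

lemma rp_even: "recfn n g \<Longrightarrow> rpred n (\<lambda>xs. even (g xs))"
  using rp_eq[OF rf_mod2[of n g] rf_const[of n 0]] by (simp add: even_iff_mod_2_eq_zero)

lemma rf_min: "recfn n g \<Longrightarrow> recfn n h \<Longrightarrow> recfn n (\<lambda>xs. min (g xs) (h xs))"
  unfolding min_def by (intro rf_if rp_le) auto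

lemma comp_pointwise:
  assumes F: "computable F" and psi: "recfn 2 (\<lambda>xs. \<psi> (xs!0) (xs!1))"
  shows "computable (\<lambda>p. F (\<lambda>i. \<psi> i (p i)))"
proof -
  define T where "T = (\<lambda>c. list_encode (map (\<lambda>i. \<psi> i (cnth c i)) [0..<clen c]))"
  have T: "recfn 1 (\<lambda>xs. T (xs!0))"
  proof -
    have a: "recfn (Suc 1) (\<lambda>zs. \<psi> (zs!0) (cnth (zs!1) (zs!0)))"
      by (intro rf_app2[OF psi] rf_cnth rf_proj) simp_all
    have "recfn 1 (\<lambda>xs. list_encode (map (\<lambda>i. (\<lambda>zs. \<psi> (zs!0) (cnth (zs!1) (zs!0))) (i # xs)) [0..<clen (xs!0)]))"
      by (rule rf_enc[OF a]) (intro rf_clen rf_proj; simp)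
    then show ?thesis unfolding T_def by simp
  qed
  have Tp: "T (pref p m) = pref (\<lambda>i. \<psi> i (p i)) m" for p m
    unfolding T_def clen_pref pref_def[of "\<lambda>i. \<psi> i (p i)"]
    by (rule arg_cong[where f=list_encode], rule map_cong) (auto simp: cnth_pref)
  have "computable (\<lambda>p. if True then F (\<lambda>i. \<psi> i (p i)) else None)"
    by (rule comp_input[OF F T, of "\<lambda>_. True" "\<lambda>p i. \<psi> i (p i)" "\<lambda>p m. m"]) (auto simp: Tp)
  then show ?thesis by simp
qed

definition evens :: "baire \<Rightarrow> baire" where "evens s j = s (2 * j)"
definition odds :: "baire \<Rightarrow> baire" where "odds s j = s (Suc (2 * j))"

lemma evens_bpair [simp]: "evens (bpair p r) = p"
  unfolding evens_def bpair_def by auto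
lemma odds_bpair [simp]: "odds (bpair p r) = r"
  unfolding odds_def bpair_def by auto

definition fo :: "nat \<Rightarrow> nat \<Rightarrow> nat" where
  "fo c j = (if Suc (2 * j) < clen c then cnth c (Suc (2 * j)) else 0)"

definition Tm :: "nat \<Rightarrow> nat" where
  "Tm c = list_encode (map (\<lambda>i. if even i then cnth c i else cnth c (Suc (2 * (knzi (fo c) (clen c div 2) (i div 2) - 1))) - 1)
      [0..<min (clen c) (2 * cnt (fo c) (clen c div 2))])"

lemma fo_rec: "recfn 2 (\<lambda>xs. fo (xs!0) (xs!1))"
  unfolding fo_def by (intro rf_if rp_less rf_Suc rf_mult rf_const rf_proj rf_clen rf_cnth) simp_all

lemma Tm_rec: "recfn 1 (\<lambda>xs. Tm (xs!0))"
proof -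
  have f1: "recfn 2 (\<lambda>zs. fo (zs!1) (zs!0))" by (intro rf_app2[OF fo_rec] rf_proj) simp_all
  have f2: "recfn 3 (\<lambda>zs. fo (zs!2) (zs!0))" by (intro rf_app2[OF fo_rec] rf_proj) simp_all
  have c1: "recfn 1 (\<lambda>xs. cnt (\<lambda>i. fo (xs!0) i) (clen (xs!0) div 2))"
    using rf_cnt[of 1 "\<lambda>zs. fo (zs!1) (zs!0)" "\<lambda>xs. clen (xs!0) div 2"] f1
      rf_div2[OF rf_clen[OF rf_proj[of 0 1]]] by (simp add: numeral_2_eq_2)
  have kn: "recfn 2 (\<lambda>ys. knzi (\<lambda>i. fo (ys!1) i) (clen (ys!1) div 2) (ys!0 div 2))"
    using rf_knzi[of 2 "\<lambda>zs. fo (zs!2) (zs!0)" "\<lambda>ys. clen (ys!1) div 2" "\<lambda>ys. ys!0 div 2"] f2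
      rf_div2[OF rf_clen[OF rf_proj[of 1 2]]] rf_div2[OF rf_proj[of 0 2]] by (simp add: numeral_3_eq_3 numeral_2_eq_2)
  have body: "recfn 2 (\<lambda>ys. if even (ys!0) then cnth (ys!1) (ys!0) else
        cnth (ys!1) (Suc (2 * (knzi (\<lambda>i. fo (ys!1) i) (clen (ys!1) div 2) (ys!0 div 2) - 1))) - 1)"
    by (intro rf_if rp_even rf_cnth rf_pred rf_Suc rf_mult rf_const kn rf_proj) simp_all
  have L: "recfn 1 (\<lambda>xs. min (clen (xs!0)) (2 * cnt (\<lambda>i. fo (xs!0) i) (clen (xs!0) div 2)))"
    by (intro rf_min rf_clen rf_proj rf_mult rf_const c1) simp
  have "recfn 1 (\<lambda>xs. list_encode (map (\<lambda>i. (\<lambda>ys. if even (ys!0) then cnth (ys!1) (ys!0) else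
        cnth (ys!1) (Suc (2 * (knzi (\<lambda>i. fo (ys!1) i) (clen (ys!1) div 2) (ys!0 div 2) - 1))) - 1) (i # xs))
      [0..<min (clen (xs!0)) (2 * cnt (\<lambda>i. fo (xs!0) i) (clen (xs!0) div 2))]))"
    by (rule rf_enc[OF _ L]) (use body in \<open>simp add: numeral_2_eq_2\<close>)
  then show ?thesis unfolding Tm_def by (rule recfn_cong) (simp add: One_nat_def cong: if_cong)
qed

lemma Tm_pref:
  assumes inf: "infinite (nzset (odds s))"
  shows "Tm (pref s m) = pref (bpair (evens s) (minus1 (odds s))) (min m (2 * cnt (odds s) (m div 2)))"
proof -
  let ?r = "odds s" and ?c = "pref s m"
  have fo: "fo ?c j = ?r j" if "j < m div 2" for j
  proof -
    have "Suc (2 * j) < m" using that by linarith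
    then show ?thesis by (simp add: fo_def clen_pref cnth_pref odds_def)
  qed
  have K: "cnt (fo ?c) (m div 2) = cnt ?r (m div 2)" by (rule cnt_agree) (simp add: fo)
  let ?L = "min m (2 * cnt ?r (m div 2))"
  have "(if even i then cnth ?c i else cnth ?c (Suc (2 * (knzi (fo ?c) (m div 2) (i div 2) - 1))) - 1)
        = bpair (evens s) (minus1 ?r) i" if i: "i < ?L" for i
  proof (cases "even i")
    case True
    then have "cnth ?c i = s i" using i by (simp add: cnth_pref)
    then show ?thesis using True by (simp add: bpair_def evens_def)
  next
    case False
    define k where "k = i div 2"
    have kK: "k < cnt ?r (m div 2)" using i False unfolding k_def by linarith
    define e where "e = enumerate (nzset ?r) k"
    have em: "e < m div 2" unfolding e_def by (rule enum_lt_cnt[OF inf kK])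
    have re: "?r e \<noteq> 0" unfolding e_def by (rule enum_nz[OF inf])
    have ce: "cnt (fo ?c) e = k"
    proof -
      have "cnt (fo ?c) e = cnt ?r e" by (rule cnt_agree) (use em fo in auto)
      then show ?thesis using cnt_enum[OF inf] e_def by simp
    qed
    have kn: "knzi (fo ?c) (m div 2) k = Suc e"
      by (rule knzi_found[OF em]) (use fo[OF em] re ce in auto)
    have "Suc (2 * e) < m" using em by linarith
    then have "cnth ?c (Suc (2 * e)) = ?r e" by (simp add: cnth_pref odds_def)
    then show ?thesis using False kn by (simp add: k_def[symmetric] bpair_def minus1_def e_def)
  qed
  then show ?thesis
    unfolding Tm_def clen_pref K pref_def[of "bpair _ _"]
    by (intro arg_cong[where f=list_encode] map_cong) auto
qed

lemma comp_minus1odd: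
  assumes F: "computable F"
  shows "computable (\<lambda>s. if infinite (nzset (odds s)) then F (bpair (evens s) (minus1 (odds s))) else None)"
proof (rule comp_input[OF F Tm_rec])
  fix s m assume "infinite (nzset (odds s))"
  then show "Tm (pref s m) = pref (bpair (evens s) (minus1 (odds s))) (min m (2 * cnt (odds s) (m div 2)))"
    by (rule Tm_pref)
next
  fix s L assume inf: "infinite (nzset (odds s))"
  obtain B where B: "L \<le> cnt (odds s) B" using cnt_unbounded[OF inf] by blast
  have "cnt (odds s) B \<le> cnt (odds s) ((2 * B + L) div 2)" by (rule cnt_mono) simp
  then show "\<exists>m. L \<le> min m (2 * cnt (odds s) (m div 2))" using B by (intro exI[of _ "2 * B + L"]) simp
qed

definition cmp :: "(baire \<Rightarrow> baire option) \<Rightarrow> (baire \<Rightarrow> baire option) \<Rightarrow> (baire \<Rightarrow> baire option) \<Rightarrow> baire \<Rightarrow> baire option" where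
  "cmp K G H p = (case K p of None \<Rightarrow> None | Some k \<Rightarrow> (case G k of None \<Rightarrow> None | Some r \<Rightarrow> H (bpair p r)))"

lemma W_red_iff: "W_red dX dY f dU dV g \<longleftrightarrow>
  (\<exists>H K. computable H \<and> computable K \<and> (\<forall>G. realizes dU dV G g \<longrightarrow> realizes dX dY (cmp K G H) f))"
  unfolding W_red_def cmp_def by simp

lemma comp_Some: "cmp K G H p = Some ou \<Longrightarrow> \<exists>k r. K p = Some k \<and> G k = Some r \<and> H (bpair p r) = Some ou"
  unfolding cmp_def by (auto split: option.splits)

lemma comp_eq: "K p = Some k \<Longrightarrow> G k = Some r \<Longrightarrow> cmp K G H p = H (bpair p r)"
  unfolding cmp_def by simp

lemma cont_H:
  assumes "computable H" "H s = Some ou"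
  shows "\<exists>m. \<forall>s' ou'. (\<forall>i<m. s' i = s i) \<longrightarrow> H s' = Some ou' \<longrightarrow> ou' n = ou n"
proof -
  obtain h where h: "total_rec2 h" "assoc h H" using assms(1) computable_iff by blast
  obtain m where m: "h (pref s m) n \<noteq> 0" using h(2) assms(2) unfolding assoc_def by blast
  have "ou' n = ou n" if "\<forall>i<m. s' i = s i" "H s' = Some ou'" for s' ou'
  proof -
    have "pref s' m = pref s m" by (rule pref_eqI) (use that in auto)
    then show ?thesis using h(2) assms(2) that(2) m unfolding assoc_def by (metis Suc_inject)
  qed
  then show ?thesis by blast
qed

lemma bpair_agree: "(\<forall>i<m. p' i = p i) \<Longrightarrow> (\<forall>i<m. r' i = r i) \<Longrightarrow> \<forall>i<m. bpair p' r' i = bpair p r i"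
  unfolding bpair_def by auto

lemma ev_ge: "\<forall>\<^sub>F n in sequentially. m \<le> prod_encode (n, j)"
  unfolding eventually_sequentially using le_prod_encode_1 order_trans by blast

lemma lim_ev:
  assumes "\<forall>j. \<forall>\<^sub>F n in sequentially. p (prod_encode (n, j)) = q j"
  shows "lim_baire p = Some q"
proof -
  have th: "(THE a. \<forall>\<^sub>F n in sequentially. p (prod_encode (n, j)) = a) = q j" for j
  proof (rule the_equality)
    show "\<forall>\<^sub>F n in sequentially. p (prod_encode (n, j)) = q j" using assms by blast
    fix a assume "\<forall>\<^sub>F n in sequentially. p (prod_encode (n, j)) = a"
    then have "\<forall>\<^sub>F n in sequentially. a = q j" using assms[rule_format, of j]
      by (rule eventually_elim2) simp
    then show "a = q j" by simp
  qed
  show ?thesis unfolding lim_baire_def using assms th by auto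
qed

lemma lim_cong:
  assumes "\<forall>j. \<forall>\<^sub>F n in sequentially. p (prod_encode (n, j)) = p' (prod_encode (n, j))"
  shows "lim_baire p = lim_baire p'"
proof -
  have th: "(\<forall>\<^sub>F n in sequentially. p (prod_encode (n, j)) = a) \<longleftrightarrow> (\<forall>\<^sub>F n in sequentially. p' (prod_encode (n, j)) = a)" for j a
  proof
    assume "\<forall>\<^sub>F n in sequentially. p (prod_encode (n, j)) = a"
    then show "\<forall>\<^sub>F n in sequentially. p' (prod_encode (n, j)) = a"
      using assms[rule_format, of j] by (rule eventually_elim2) simp
  next
    assume "\<forall>\<^sub>F n in sequentially. p' (prod_encode (n, j)) = a"
    then show "\<forall>\<^sub>F n in sequentially. p (prod_encode (n, j)) = a"
      using assms[rule_format, of j] by (rule eventually_elim2) simp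
  qed
  have ex: "(\<exists>a. \<forall>\<^sub>F n in sequentially. p (prod_encode (n, j)) = a) \<longleftrightarrow> (\<exists>a. \<forall>\<^sub>F n in sequentially. p' (prod_encode (n, j)) = a)" for j
    using th by blast
  show ?thesis unfolding lim_baire_def using ex th by simp
qed

definition cj :: "baire \<Rightarrow> baire" where "cj q i = q (snd (prod_decode i))"
definition sp :: "baire \<Rightarrow> nat \<Rightarrow> baire \<Rightarrow> baire" where "sp p m q i = (if i < m then p i else cj q i)"
definition patch :: "baire \<Rightarrow> nat \<Rightarrow> baire \<Rightarrow> baire" where "patch p0 m p i = (if i < m then p0 i else p i)"

lemma lim_cj: "lim_baire (cj q) = Some q"
  by (rule lim_ev) (simp add: cj_def)

lemma lim_sp: "lim_baire (sp p m q) = Some q"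
proof (rule lim_ev, rule allI)
  fix j show "\<forall>\<^sub>F n in sequentially. sp p m q (prod_encode (n, j)) = q j"
    using ev_ge[of m j] by (rule eventually_mono) (simp add: sp_def cj_def)
qed

lemma lim_patch: "lim_baire (patch p0 m p) = lim_baire p"
proof (rule lim_cong, rule allI)
  fix j show "\<forall>\<^sub>F n in sequentially. patch p0 m p (prod_encode (n, j)) = p (prod_encode (n, j))"
    using ev_ge[of m j] by (rule eventually_mono) (simp add: patch_def)
qed

lemma jump_cj: "dX q = Some x \<Longrightarrow> jump_rep dX (cj q) = Some x"
  by (simp add: jump_rep_def lim_cj)
lemma jump_sp: "dX q = Some x \<Longrightarrow> jump_rep dX (sp p m q) = Some x"
  by (simp add: jump_rep_def lim_sp)
lemma jump_patch: "jump_rep dX (patch p0 m p) = jump_rep dX p"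
  by (simp add: jump_rep_def lim_patch)

lemma sp_agree: "\<forall>i<m. sp p m q i = p i" by (simp add: sp_def)
lemma patch_agree: "\<forall>i<m. patch p0 m p i = p0 i" by (simp add: patch_def)

lemma patch_rec: "recfn 2 (\<lambda>xs. if xs!0 < m then cnth (list_encode (map p0 [0..<m])) (xs!0) else xs!1)"
  by (intro rf_if rp_less rf_proj rf_const rf_cnth) simp_all

lemma patch_eq: "patch p0 m p = (\<lambda>i. (\<lambda>i v. if i < m then cnth (list_encode (map p0 [0..<m])) i else v) i (p i))"
proof (rule ext)
  fix i show "patch p0 m p i = (if i < m then cnth (list_encode (map p0 [0..<m])) i else p i)"
    by (cases "i < m") (simp_all add: patch_def cnth_enc)
qed

lemma comp_patch: assumes "computable F" shows "computable (\<lambda>p. F (patch p0 m p))"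
proof -
  have "computable (\<lambda>p. F (\<lambda>i. (\<lambda>i v. if i < m then cnth (list_encode (map p0 [0..<m])) i else v) i (p i)))"
    by (rule comp_pointwise[OF assms]) (rule patch_rec)
  then show ?thesis by (simp only: patch_eq)
qed

lemma pdom_sv: "pdom (sv f) = dom f"
  unfolding pdom_def sv_def by (auto split: option.splits)

lemma sv_iff: "y \<in> sv f x \<longleftrightarrow> f x = Some y"
  unfolding sv_def by (cases "f x") auto

definition chooser :: "'u rep \<Rightarrow> 'v rep \<Rightarrow> ('u \<Rightarrow> 'v set) \<Rightarrow> baire \<Rightarrow> baire option" where
  "chooser dU dV g p = (case dU p of None \<Rightarrow> None | Some x \<Rightarrow>
      if (\<exists>q y. dV q = Some y \<and> y \<in> g x) then Some (SOME q. \<exists>y. dV q = Some y \<and> y \<in> g x) else None)"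

lemma chooser_realizes:
  assumes "\<And>x. x \<in> pdom g \<Longrightarrow> g x \<subseteq> ran dV"
  shows "realizes dU dV (chooser dU dV g) g"
  unfolding realizes_def
proof (intro allI impI)
  fix p x assume a: "dU p = Some x \<and> x \<in> pdom g"
  then obtain y where y: "y \<in> g x" unfolding pdom_def by auto
  then obtain q where "dV q = Some y" using assms a unfolding ran_def by blast
  then have ex: "\<exists>q y. dV q = Some y \<and> y \<in> g x" using y by blast
  then have "\<exists>y. dV (SOME q. \<exists>y. dV q = Some y \<and> y \<in> g x) = Some y \<and> y \<in> g x"
    by (rule someI_ex[where P="\<lambda>q. \<exists>y. dV q = Some y \<and> y \<in> g x"])
  then show "\<exists>q y. chooser dU dV g p = Some q \<and> dV q = Some y \<and> y \<in> g x"
    using a ex unfolding chooser_def by auto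
qed

lemma chooser_valid: assumes "chooser dU dV g k = Some r" shows "\<exists>y. dV r = Some y"
proof -
  obtain x where x: "dU k = Some x" and ex: "\<exists>q y. dV q = Some y \<and> y \<in> g x"
    and r: "r = (SOME q. \<exists>y. dV q = Some y \<and> y \<in> g x)"
    using assms unfolding chooser_def by (auto split: option.splits if_splits)
  have "\<exists>y. dV r = Some y \<and> y \<in> g x" unfolding r
    using ex by (rule someI_ex[where P="\<lambda>q. \<exists>y. dV q = Some y \<and> y \<in> g x"])
  then show ?thesis by blast
qed

lemma claim_gen:
  assumes red: "\<forall>G. R G \<longrightarrow> realizes (jump_rep dX) dY (cmp K G H) f'"
    and H: "computable H" and Gz: "R Gz"
    and pa: "jump_rep dX pa = Some a" "a \<in> pdom f'"
    and modif: "\<And>k r. \<not> good k \<Longrightarrow> okr r \<Longrightarrow> R (Gz(k := Some r))"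
    and okr: "\<And>k r. Gz k = Some r \<Longrightarrow> okr r"
  shows "\<exists>ra oa m. H (bpair pa ra) = Some oa \<and> (\<exists>y. dY oa = Some y \<and> y \<in> f' a) \<and>
     (\<forall>p' x. (\<forall>i<m. p' i = pa i) \<longrightarrow> jump_rep dX p' = Some x \<longrightarrow> x \<in> pdom f' \<longrightarrow> \<not> (\<exists>k. K p' = Some k \<and> good k) \<longrightarrow>
        (\<exists>ou' y. H (bpair p' ra) = Some ou' \<and> ou' n = oa n \<and> dY ou' = Some y \<and> y \<in> f' x))"
proof -
  from red Gz pa obtain oa ya where ca: "cmp K Gz H pa = Some oa" "dY oa = Some ya" "ya \<in> f' a"
    unfolding realizes_def by blast
  from comp_Some[OF ca(1)] obtain ka ra where kra: "K pa = Some ka" "Gz ka = Some ra" "H (bpair pa ra) = Some oa"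
    by blast
  have "\<exists>m. \<forall>s' ou'. (\<forall>i<m. s' i = bpair pa ra i) \<longrightarrow> H s' = Some ou' \<longrightarrow> ou' n = oa n"
    by (rule cont_H[OF H, where s="bpair pa ra" and ou=oa, OF kra(3)])
  then obtain m where m: "\<forall>s' ou'. (\<forall>i<m. s' i = bpair pa ra i) \<longrightarrow> H s' = Some ou' \<longrightarrow> ou' n = oa n" ..
  have main: "\<exists>ou' y. H (bpair p' ra) = Some ou' \<and> ou' n = oa n \<and> dY ou' = Some y \<and> y \<in> f' x"
    if ag: "\<forall>i<m. p' i = pa i" and jx: "jump_rep dX p' = Some x" and xd: "x \<in> pdom f'"
      and bad: "\<not> (\<exists>k. K p' = Some k \<and> good k)" for p' x
  proof -
    from red Gz jx xd obtain o0 where "cmp K Gz H p' = Some o0"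
      unfolding realizes_def by blast
    then obtain k' where k': "K p' = Some k'" using comp_Some by blast
    have nb: "\<not> good k'" using bad k' by blast
    have G1: "R (Gz(k' := Some ra))" by (rule modif[OF nb okr[OF kra(2)]])
    from red G1 jx xd obtain ou' y where c1: "cmp K (Gz(k' := Some ra)) H p' = Some ou'" "dY ou' = Some y" "y \<in> f' x"
      unfolding realizes_def by blast
    have Hp: "H (bpair p' ra) = Some ou'" using c1(1) k' comp_eq[where K=K and p=p' and k=k' and G="Gz(k' := Some ra)" and r=ra and H=H] by simp
    have "ou' n = oa n" using m bpair_agree[OF ag, of ra ra] Hp by simp
    then show ?thesis using Hp c1(2,3) by blast
  qed
  show ?thesis
  proof (rule exI[of _ ra], rule exI[of _ oa], rule exI[of _ m], intro conjI allI impI)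
    show "H (bpair pa ra) = Some oa" by (rule kra(3))
    show "\<exists>y. dY oa = Some y \<and> y \<in> f' a" using ca(2,3) by blast
    fix p' x assume "\<forall>i<m. p' i = pa i" "jump_rep dX p' = Some x" "x \<in> pdom f'" "\<not> (\<exists>k. K p' = Some k \<and> good k)"
    then show "\<exists>ou' y. H (bpair p' ra) = Some ou' \<and> ou' n = oa n \<and> dY ou' = Some y \<and> y \<in> f' x" by (rule main)
  qed
qed

lemma claimN:
  assumes red: "\<forall>G. R G \<longrightarrow> realizes (jump_rep dX) rep_nat (cmp K G H) (sv f)"
    and H: "computable H" and Gz: "R Gz"
    and modif: "\<And>k r. \<not> good k \<Longrightarrow> okr r \<Longrightarrow> R (Gz(k := Some r))"
    and okr: "\<And>k r. Gz k = Some r \<Longrightarrow> okr r"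
    and pa: "jump_rep dX pa = Some a" "a \<in> dom f"
  shows "\<exists>m. \<forall>p' x. (\<forall>i<m. p' i = pa i) \<longrightarrow> jump_rep dX p' = Some x \<longrightarrow> x \<in> dom f \<longrightarrow> f x \<noteq> f a \<longrightarrow>
     (\<exists>k. K p' = Some k \<and> good k)"
proof -
  have "\<exists>ra oa m. H (bpair pa ra) = Some oa \<and> (\<exists>y. rep_nat oa = Some y \<and> y \<in> sv f a) \<and>
     (\<forall>p' x. (\<forall>i<m. p' i = pa i) \<longrightarrow> jump_rep dX p' = Some x \<longrightarrow> x \<in> pdom (sv f) \<longrightarrow> \<not> (\<exists>k. K p' = Some k \<and> good k) \<longrightarrow>
        (\<exists>ou' y. H (bpair p' ra) = Some ou' \<and> ou' 0 = oa 0 \<and> rep_nat ou' = Some y \<and> y \<in> sv f x))"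
    by (rule claim_gen[where R=R and dX=dX and dY=rep_nat and K=K and H=H and f'="sv f" and Gz=Gz and pa=pa and a=a and good=good and okr=okr and n=0])
       (fact red, fact H, fact Gz, fact pa(1), simp add: pdom_sv pa(2), fact modif, fact okr)
  then obtain ra oa m where c: "H (bpair pa ra) = Some oa" "\<exists>y. rep_nat oa = Some y \<and> y \<in> sv f a"
    "\<forall>p' x. (\<forall>i<m. p' i = pa i) \<longrightarrow> jump_rep dX p' = Some x \<longrightarrow> x \<in> pdom (sv f) \<longrightarrow> \<not> (\<exists>k. K p' = Some k \<and> good k) \<longrightarrow>
        (\<exists>ou' y. H (bpair p' ra) = Some ou' \<and> ou' 0 = oa 0 \<and> rep_nat ou' = Some y \<and> y \<in> sv f x)"
    by blast
  have fa: "f a = Some (oa 0)" using c(2) by (simp add: rep_nat_def sv_iff)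
  show ?thesis
  proof (rule exI[of _ m], intro allI impI)
    fix p' x assume a: "\<forall>i<m. p' i = pa i" "jump_rep dX p' = Some x" "x \<in> dom f" "f x \<noteq> f a"
    show "\<exists>k. K p' = Some k \<and> good k"
    proof (rule ccontr)
      assume "\<not> (\<exists>k. K p' = Some k \<and> good k)"
      then obtain ou' y where "ou' 0 = oa 0" "rep_nat ou' = Some y" "y \<in> sv f x"
        using c(3) a(1,2,3) unfolding pdom_sv by blast
      then have "f x = f a" using fa by (simp add: rep_nat_def sv_iff)
      then show False using a(4) by simp
    qed
  qed
qed

lemma goodN:
  assumes red: "\<forall>G. R G \<longrightarrow> realizes (jump_rep dX) rep_nat (cmp K G H) (sv f)"
    and H: "computable H" and Gz: "R Gz"
    and modif: "\<And>k r. \<not> good k \<Longrightarrow> okr r \<Longrightarrow> R (Gz(k := Some r))"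
    and okr: "\<And>k r. Gz k = Some r \<Longrightarrow> okr r"
    and domf: "dom f \<subseteq> ran dX" and nc: "\<exists>a\<in>dom f. \<exists>b\<in>dom f. f a \<noteq> f b"
  shows "\<exists>p0 M. \<forall>p' x. (\<forall>i<M. p' i = p0 i) \<longrightarrow> jump_rep dX p' = Some x \<longrightarrow> x \<in> dom f \<longrightarrow>
     (\<exists>k. K p' = Some k \<and> good k)"
proof -
  obtain a b where ab: "a \<in> dom f" "b \<in> dom f" "f a \<noteq> f b" using nc by blast
  obtain qa where qa: "dX qa = Some a" using ab(1) domf unfolding ran_def by blast
  obtain qb where qb: "dX qb = Some b" using ab(2) domf unfolding ran_def by blast
  have "\<exists>m1. \<forall>p' x. (\<forall>i<m1. p' i = cj qa i) \<longrightarrow> jump_rep dX p' = Some x \<longrightarrow> x \<in> dom f \<longrightarrow> f x \<noteq> f a \<longrightarrow>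
     (\<exists>k. K p' = Some k \<and> good k)"
    by (rule claimN[where R=R and dX=dX and K=K and H=H and f=f and Gz=Gz and good=good and okr=okr and pa="cj qa" and a=a])
       (fact red, fact H, fact Gz, fact modif, fact okr, rule jump_cj[where dX=dX and q=qa and x=a, OF qa], fact ab(1))
  then obtain m1 where m1: "\<forall>p' x. (\<forall>i<m1. p' i = cj qa i) \<longrightarrow> jump_rep dX p' = Some x \<longrightarrow> x \<in> dom f \<longrightarrow> f x \<noteq> f a \<longrightarrow>
     (\<exists>k. K p' = Some k \<and> good k)" ..
  define pb where "pb = sp (cj qa) m1 qb"
  have jb: "jump_rep dX pb = Some b" unfolding pb_def by (rule jump_sp[where dX=dX and q=qb and x=b, OF qb])
  have "\<exists>m2. \<forall>p' x. (\<forall>i<m2. p' i = pb i) \<longrightarrow> jump_rep dX p' = Some x \<longrightarrow> x \<in> dom f \<longrightarrow> f x \<noteq> f b \<longrightarrow>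
     (\<exists>k. K p' = Some k \<and> good k)"
    by (rule claimN[where R=R and dX=dX and K=K and H=H and f=f and Gz=Gz and good=good and okr=okr and pa=pb and a=b])
       (fact red, fact H, fact Gz, fact modif, fact okr, fact jb, fact ab(2))
  then obtain m2 where m2: "\<forall>p' x. (\<forall>i<m2. p' i = pb i) \<longrightarrow> jump_rep dX p' = Some x \<longrightarrow> x \<in> dom f \<longrightarrow> f x \<noteq> f b \<longrightarrow>
     (\<exists>k. K p' = Some k \<and> good k)" ..
  show ?thesis
  proof (rule exI[of _ pb], rule exI[of _ "max m1 m2"], intro allI impI)
    fix p' x assume a: "\<forall>i<max m1 m2. p' i = pb i" "jump_rep dX p' = Some x" "x \<in> dom f"
    have a1: "\<forall>i<m1. p' i = cj qa i" using a(1) sp_agree[of m1 "cj qa" qb] unfolding pb_def by simp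
    have a2: "\<forall>i<m2. p' i = pb i" using a(1) by simp
    show "\<exists>k. K p' = Some k \<and> good k"
    proof (cases "f x = f a")
      case True
      then have "f x \<noteq> f b" using ab(3) by simp
      then show ?thesis using m2 a2 a(2,3) by blast
    next
      case False
      then show ?thesis using m1 a1 a(2,3) by blast
    qed
  qed
qed

lemma comp_HT: assumes "computable H"
  shows "computable (\<lambda>s. H (bpair (patch p0 m (evens s)) (odds s)))"
proof -
  have eq: "bpair (patch p0 m (evens s)) (odds s) =
    (\<lambda>i. (\<lambda>i v. if even i \<and> i div 2 < m then cnth (list_encode (map p0 [0..<m])) (i div 2) else v) i (s i))" for s
  proof (rule ext)
    fix i show "bpair (patch p0 m (evens s)) (odds s) i = (if even i \<and> i div 2 < m then cnth (list_encode (map p0 [0..<m])) (i div 2) else s i)"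
      by (cases "even i"; cases "i div 2 < m") (auto simp: bpair_def patch_def evens_def odds_def cnth_enc)
  qed
  have "computable (\<lambda>s. H (\<lambda>i. (\<lambda>i v. if even i \<and> i div 2 < m then cnth (list_encode (map p0 [0..<m])) (i div 2) else v) i (s i)))"
    by (rule comp_pointwise[OF assms]) (intro rf_if rp_and rp_even rp_less rf_div2 rf_proj rf_const rf_cnth; simp)
  then show ?thesis by (simp only: eq)
qed

lemma realizes_Ttot: "realizes dU dV G (Ttot dV g) \<Longrightarrow> realizes dU dV G g"
  unfolding realizes_def Ttot_def pdom_def by (metis (mono_tags, lifting) mem_Collect_eq)

lemma co_total_N:
  fixes dX :: "'x rep" and f :: "'x \<Rightarrow> nat option" and dU :: "'u rep" and dV :: "'v rep" and g :: "'u \<Rightarrow> 'v set"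
  assumes domf: "dom f \<subseteq> ran dX" and nc: "\<exists>a\<in>dom f. \<exists>b\<in>dom f. f a \<noteq> f b" and pr: "problem dU dV g"
  shows "W_red (jump_rep dX) rep_nat (sv f) dU dV (Ttot dV g) \<longleftrightarrow> W_red (jump_rep dX) rep_nat (sv f) dU dV g"
proof
  assume "W_red (jump_rep dX) rep_nat (sv f) dU dV g"
  then show "W_red (jump_rep dX) rep_nat (sv f) dU dV (Ttot dV g)"
    unfolding W_red_iff using realizes_Ttot by blast
next
  assume "W_red (jump_rep dX) rep_nat (sv f) dU dV (Ttot dV g)"
  then obtain H K where H: "computable H" and K: "computable K"
    and red: "\<forall>G. realizes dU dV G (Ttot dV g) \<longrightarrow> realizes (jump_rep dX) rep_nat (cmp K G H) (sv f)"
    unfolding W_red_iff by blast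
  define Gz where "Gz = chooser dU dV (Ttot dV g)"
  define good where "good = (\<lambda>k. \<exists>u. dU k = Some u \<and> u \<in> pdom g)"
  define okr where "okr = (\<lambda>r. \<exists>y. dV r = Some y)"
  have sub: "Ttot dV g x \<subseteq> ran dV" if "x \<in> pdom (Ttot dV g)" for x
    using pr unfolding problem_def Ttot_def by auto
  have Gz: "realizes dU dV Gz (Ttot dV g)" unfolding Gz_def by (rule chooser_realizes[OF sub])
  have okr: "okr r" if "Gz k = Some r" for k r
    using chooser_valid[of dU dV "Ttot dV g" k r] that unfolding Gz_def okr_def by blast
  have modif: "realizes dU dV (Gz(k := Some r)) (Ttot dV g)" if nb: "\<not> good k" and ok: "okr r" for k r
    unfolding realizes_def
  proof (intro allI impI)
    fix p x assume a: "dU p = Some x \<and> x \<in> pdom (Ttot dV g)"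
    show "\<exists>q y. (Gz(k := Some r)) p = Some q \<and> dV q = Some y \<and> y \<in> Ttot dV g x"
    proof (cases "p = k")
      case True
      then have "x \<notin> pdom g" using nb a unfolding good_def by blast
      then show ?thesis using True ok unfolding okr_def Ttot_def by (auto simp: ran_def)
    next
      case False
      then show ?thesis using Gz a unfolding realizes_def by simp
    qed
  qed
  have "\<exists>p0 M. \<forall>p' x. (\<forall>i<M. p' i = p0 i) \<longrightarrow> jump_rep dX p' = Some x \<longrightarrow> x \<in> dom f \<longrightarrow> (\<exists>k. K p' = Some k \<and> good k)"
    by (rule goodN[where R="\<lambda>G. realizes dU dV G (Ttot dV g)" and dX=dX and K=K and H=H and f=f and Gz=Gz and good=good and okr=okr])
      (fact red, fact H, fact Gz, fact modif, fact okr, fact domf, fact nc)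
  then obtain p0 M where good: "\<forall>p' x. (\<forall>i<M. p' i = p0 i) \<longrightarrow> jump_rep dX p' = Some x \<longrightarrow> x \<in> dom f \<longrightarrow> (\<exists>k. K p' = Some k \<and> good k)"
    by blast
  define K' where "K' = (\<lambda>p. K (patch p0 M p))"
  define H' where "H' = (\<lambda>s. H (bpair (patch p0 M (evens s)) (odds s)))"
  have cK': "computable K'" unfolding K'_def by (rule comp_patch[OF K])
  have cH': "computable H'" unfolding H'_def by (rule comp_HT[OF H])
  have "realizes (jump_rep dX) rep_nat (cmp K' G H') (sv f)" if G: "realizes dU dV G g" for G
  proof -
    define G' where "G' = (\<lambda>k. if good k then G k else Gz k)"
    have G': "realizes dU dV G' (Ttot dV g)"
      unfolding realizes_def
    proof (intro allI impI)
      fix p x assume a: "dU p = Some x \<and> x \<in> pdom (Ttot dV g)"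
      show "\<exists>q y. G' p = Some q \<and> dV q = Some y \<and> y \<in> Ttot dV g x"
      proof (cases "good p")
        case True
        then have "x \<in> pdom g" using a unfolding good_def by auto
        then show ?thesis using G a True unfolding realizes_def G'_def Ttot_def by auto
      next
        case False
        then show ?thesis using Gz a unfolding realizes_def G'_def by simp
      qed
    qed
    have R: "realizes (jump_rep dX) rep_nat (cmp K G' H) (sv f)" using red G' by blast
    show ?thesis
      unfolding realizes_def
    proof (intro allI impI)
      fix p x assume a: "jump_rep dX p = Some x \<and> x \<in> pdom (sv f)"
      let ?p = "patch p0 M p"
      have jp: "jump_rep dX ?p = Some x" using a by (simp add: jump_patch)
      obtain k where k: "K ?p = Some k" "good k"
        using good patch_agree[of M p0 p] jp a unfolding pdom_sv by blast
      have eq: "cmp K' G H' p = cmp K G' H ?p"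
        unfolding cmp_def K'_def H'_def G'_def using k by (simp split: option.splits)
      show "\<exists>q y. cmp K' G H' p = Some q \<and> rep_nat q = Some y \<and> y \<in> sv f x"
        using R jp a unfolding realizes_def eq by blast
    qed
  qed
  then show "W_red (jump_rep dX) rep_nat (sv f) dU dV g"
    unfolding W_red_iff using cK' cH' by blast
qed

definition sucs :: "baire \<Rightarrow> baire" where "sucs q i = Suc (q i)"

lemma enumerate_UNIV_nat: "enumerate (UNIV :: nat set) n = n"
proof (induction n)
  case 0 then show ?case by (simp add: enumerate_0)
next
  case (Suc n)
  have "enumerate (UNIV::nat set) (Suc n) = (LEAST s. s \<in> UNIV \<and> enumerate UNIV n < s)"
    by (rule enumerate_Suc'') simp
  also have "\<dots> = Suc n" using Suc by (simp add: Least_Suc2 Least_equality)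
  finally show ?case .
qed

lemma nzset_sucs: "nzset (sucs q) = UNIV" by (simp add: nzset_def sucs_def)

lemma minus1_sucs: "minus1 (sucs q) = q"
  by (rule ext) (simp add: minus1_def nzset_sucs enumerate_UNIV_nat sucs_def)

lemma completion_sucs: "completion dU (sucs q) = Some (dU q)"
  unfolding completion_def nzset_sucs minus1_sucs by auto

lemma completion_SS: "completion dU k = Some (Some u) \<Longrightarrow> infinite (nzset k) \<and> dU (minus1 k) = Some u"
  unfolding completion_def by (auto split: if_splits)

lemma completion_carrier: "\<exists>z. completion dV r = Some z \<and> z \<in> carrier_bar dV"
  unfolding completion_def carrier_bar_def by (auto simp: ran_def)

lemma pdom_cbar: "x \<in> pdom (cbar dV g)"
  unfolding pdom_def cbar_def carrier_bar_def by (auto split: option.splits)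

lemma cbar_bad: "\<not> (\<exists>u. y = Some u \<and> u \<in> pdom g) \<Longrightarrow> cbar dV g y = carrier_bar dV"
  unfolding cbar_def by (auto split: option.splits)

lemma cbar_good: "u \<in> pdom g \<Longrightarrow> cbar dV g (Some u) = Some ` g u"
  unfolding cbar_def by simp

lemma ran_completion: "carrier_bar dV \<subseteq> ran (completion dV)"
proof
  fix z assume "z \<in> carrier_bar dV"
  then consider "z = None" | v q where "z = Some v" "dV q = Some v" unfolding carrier_bar_def ran_def by blast
  then show "z \<in> ran (completion dV)"
  proof cases
    case 1
    have "completion dV (\<lambda>_. 0) = Some None" by (simp add: completion_def nzset_def)
    then show ?thesis using 1 by (auto simp: ran_def)
  next
    case 2
    then show ?thesis using completion_sucs[of dV q] by (auto simp: ran_def)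
  qed
qed

lemma comp_HC: assumes "computable H"
  shows "computable (\<lambda>s. H (bpair (patch p0 m (evens s)) (sucs (odds s))))"
proof -
  have eq: "bpair (patch p0 m (evens s)) (sucs (odds s)) =
    (\<lambda>i. (\<lambda>i v. if even i then (if i div 2 < m then cnth (list_encode (map p0 [0..<m])) (i div 2) else v) else Suc v) i (s i))" for s
  proof (rule ext)
    fix i show "bpair (patch p0 m (evens s)) (sucs (odds s)) i = (if even i then (if i div 2 < m then cnth (list_encode (map p0 [0..<m])) (i div 2) else s i) else Suc (s i))"
      by (cases "even i"; cases "i div 2 < m") (auto simp: bpair_def patch_def evens_def odds_def cnth_enc sucs_def)
  qed
  have "computable (\<lambda>s. H (\<lambda>i. (\<lambda>i v. if even i then (if i div 2 < m then cnth (list_encode (map p0 [0..<m])) (i div 2) else v) else Suc v) i (s i)))"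
    by (rule comp_pointwise[OF assms]) (intro rf_if rp_even rp_less rf_div2 rf_proj rf_const rf_cnth rf_Suc; simp)
  then show ?thesis by (simp only: eq)
qed

lemma cbar_sub: assumes "problem dU dV g" shows "cbar dV g y \<subseteq> carrier_bar dV"
  using assms unfolding cbar_def carrier_bar_def problem_def pdom_def
  by (auto split: option.splits if_splits)

lemma cc_back:
  fixes dU :: "'u rep" and dV :: "'v rep" and g :: "'u \<Rightarrow> 'v set"
  assumes W: "W_red dX dY f' dU dV g"
  shows "W_red dX dY f' (completion dU) (completion dV) (cbar dV g)"
proof -
  obtain H K where H: "computable H" and K: "computable K"
    and red: "\<forall>G. realizes dU dV G g \<longrightarrow> realizes dX dY (cmp K G H) f'"
    using W unfolding W_red_iff by blast
  define K' where "K' = (\<lambda>p. map_option (\<lambda>q i. Suc (q i)) (K p))"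
  define H' where "H' = (\<lambda>s. if infinite (nzset (odds s)) then H (bpair (evens s) (minus1 (odds s))) else None)"
  have cK': "computable K'" unfolding K'_def by (rule comp_outsuc[OF K])
  have cH': "computable H'" unfolding H'_def by (rule comp_minus1odd[OF H])
  have "realizes dX dY (cmp K' G' H') f'" if G': "realizes (completion dU) (completion dV) G' (cbar dV g)" for G'
  proof -
    define G where "G = (\<lambda>k. case G' (sucs k) of None \<Rightarrow> None | Some r \<Rightarrow> if infinite (nzset r) then Some (minus1 r) else None)"
    have G: "realizes dU dV G g"
      unfolding realizes_def
    proof (intro allI impI)
      fix k x assume a: "dU k = Some x \<and> x \<in> pdom g"
      have cs: "completion dU (sucs k) = Some (Some x)" using a by (simp add: completion_sucs)
      have "\<exists>q z. G' (sucs k) = Some q \<and> completion dV q = Some z \<and> z \<in> cbar dV g (Some x)"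
        by (rule G'[unfolded realizes_def, rule_format]) (simp add: cs pdom_cbar)
      then obtain q z where q: "G' (sucs k) = Some q" "completion dV q = Some z" "z \<in> cbar dV g (Some x)"
        by blast
      have xg: "x \<in> pdom g" using a by blast
      have "z \<in> Some ` g x" using q(3) unfolding cbar_good[OF xg] .
      then obtain v where v: "z = Some v" "v \<in> g x" by blast
      have "completion dV q = Some (Some v)" using q(2) v(1) by simp
      then have "infinite (nzset q) \<and> dV (minus1 q) = Some v" by (rule completion_SS)
      then have iv: "infinite (nzset q)" "dV (minus1 q) = Some v" by simp_all
      have "G k = Some (minus1 q)" unfolding G_def using q(1) iv(1) by simp
      then show "\<exists>q y. G k = Some q \<and> dV q = Some y \<and> y \<in> g x" using v(2) iv(2) by blast
    qed
    have R: "realizes dX dY (cmp K G H) f'" using red G by blast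
    show ?thesis unfolding realizes_def
    proof (intro allI impI)
      fix p x assume a: "dX p = Some x \<and> x \<in> pdom f'"
      then obtain q' y where c: "cmp K G H p = Some q'" "dY q' = Some y" "y \<in> f' x"
        using R unfolding realizes_def by blast
      then obtain k r' where kr: "K p = Some k" "G k = Some r'" "H (bpair p r') = Some q'"
        using comp_Some by blast
      then obtain r where r: "G' (sucs k) = Some r" "infinite (nzset r)" "r' = minus1 r"
        unfolding G_def by (auto split: option.splits if_splits)
      have "cmp K' G' H' p = Some q'"
        unfolding cmp_def K'_def H'_def using kr r by (simp add: sucs_def[symmetric] del: map_option_case)
      then show "\<exists>q y. cmp K' G' H' p = Some q \<and> dY q = Some y \<and> y \<in> f' x" using c by blast
    qed
  qed
  then show ?thesis unfolding W_red_iff using cK' cH' by blast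
qed

definition goodc :: "'u rep \<Rightarrow> ('u \<Rightarrow> 'v set) \<Rightarrow> baire \<Rightarrow> bool" where
  "goodc dU g k \<longleftrightarrow> (\<exists>u. completion dU k = Some (Some u) \<and> u \<in> pdom g)"

lemma chooser_cbar:
  assumes pr: "problem dU dV g"
  shows "realizes (completion dU) (completion dV) (chooser (completion dU) (completion dV) (cbar dV g)) (cbar dV g)"
  by (rule chooser_realizes) (use cbar_sub[OF pr] ran_completion in blast)

lemma modif_cbar:
  assumes Gz: "realizes (completion dU) (completion dV) Gz (cbar dV g)" and nb: "\<not> goodc dU g k"
  shows "realizes (completion dU) (completion dV) (Gz(k := Some r)) (cbar dV g)"
  unfolding realizes_def
proof (intro allI impI)
  fix p y assume a: "completion dU p = Some y \<and> y \<in> pdom (cbar dV g)"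
  show "\<exists>q z. (Gz(k := Some r)) p = Some q \<and> completion dV q = Some z \<and> z \<in> cbar dV g y"
  proof (cases "p = k")
    case True
    then have "\<not> (\<exists>u. y = Some u \<and> u \<in> pdom g)" using nb a unfolding goodc_def by blast
    then have cb: "cbar dV g y = carrier_bar dV" by (rule cbar_bad)
    obtain z where "completion dV r = Some z" "z \<in> carrier_bar dV" using completion_carrier by blast
    then show ?thesis using True cb by simp
  next
    case False
    then show ?thesis using Gz a unfolding realizes_def by simp
  qed
qed

lemma cc_forward:
  fixes dU :: "'u rep" and dV :: "'v rep" and g :: "'u \<Rightarrow> 'v set"
  assumes pr: "problem dU dV g" and H: "computable H" and K: "computable K"
    and red: "\<forall>G. realizes (completion dU) (completion dV) G (cbar dV g) \<longrightarrow> realizes (jump_rep dX) dY (cmp K G H) f'"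
    and good: "\<forall>p' x. (\<forall>i<M. p' i = pz i) \<longrightarrow> jump_rep dX p' = Some x \<longrightarrow> x \<in> pdom f' \<longrightarrow> (\<exists>k. K p' = Some k \<and> goodc dU g k)"
  shows "W_red (jump_rep dX) dY f' dU dV g"
proof -
  define Gz where "Gz = chooser (completion dU) (completion dV) (cbar dV g)"
  have Gz: "realizes (completion dU) (completion dV) Gz (cbar dV g)" unfolding Gz_def by (rule chooser_cbar[OF pr])
  define K' where "K' = (\<lambda>p. case K (patch pz M p) of None \<Rightarrow> None | Some q \<Rightarrow> if infinite (nzset q) then Some (minus1 q) else None)"
  define H' where "H' = (\<lambda>s. H (bpair (patch pz M (evens s)) (sucs (odds s))))"
  have cK': "computable K'" unfolding K'_def by (rule comp_outminus1[OF comp_patch[OF K]])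
  have cH': "computable H'" unfolding H'_def by (rule comp_HC[OF H])
  have "realizes (jump_rep dX) dY (cmp K' G H') f'" if G: "realizes dU dV G g" for G
  proof -
    define G' where "G' = (\<lambda>k. if goodc dU g k then map_option sucs (G (minus1 k)) else Gz k)"
    have G': "realizes (completion dU) (completion dV) G' (cbar dV g)"
      unfolding realizes_def
    proof (intro allI impI)
      fix k y assume a: "completion dU k = Some y \<and> y \<in> pdom (cbar dV g)"
      show "\<exists>q z. G' k = Some q \<and> completion dV q = Some z \<and> z \<in> cbar dV g y"
      proof (cases "goodc dU g k")
        case True
        then obtain u where u: "completion dU k = Some (Some u)" "u \<in> pdom g" unfolding goodc_def by blast
        then have y: "y = Some u" using a by simp
        have "infinite (nzset k) \<and> dU (minus1 k) = Some u" using u(1) by (rule completion_SS)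
        then have du: "dU (minus1 k) = Some u" by simp
        have "\<exists>q v. G (minus1 k) = Some q \<and> dV q = Some v \<and> v \<in> g u"
          by (rule G[unfolded realizes_def, rule_format]) (simp add: du u(2))
        then obtain q v where qv: "G (minus1 k) = Some q" "dV q = Some v" "v \<in> g u" by blast
        have "G' k = Some (sucs q)" unfolding G'_def using True qv(1) by simp
        moreover have "completion dV (sucs q) = Some (Some v)" using qv(2) by (simp add: completion_sucs)
        moreover have "Some v \<in> cbar dV g y" using y cbar_good[OF u(2), of dV] qv(3) by simp
        ultimately show ?thesis by blast
      next
        case False
        then show ?thesis using Gz a unfolding realizes_def G'_def by simp
      qed
    qed
    have R: "realizes (jump_rep dX) dY (cmp K G' H) f'" using red G' by blast
    show ?thesis
      unfolding realizes_def
    proof (intro allI impI)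
      fix p x assume a: "jump_rep dX p = Some x \<and> x \<in> pdom f'"
      let ?p = "patch pz M p"
      have jp: "jump_rep dX ?p = Some x" using a by (simp add: jump_patch)
      obtain k where k: "K ?p = Some k" "goodc dU g k"
        using good patch_agree[of M pz p] jp a by blast
      then obtain u where u: "completion dU k = Some (Some u)" unfolding goodc_def by blast
      have inf: "infinite (nzset k)" using completion_SS[OF u] by simp
      have eq: "cmp K' G H' p = cmp K G' H ?p"
        unfolding cmp_def K'_def H'_def G'_def using k inf by (simp split: option.splits)
      show "\<exists>q y. cmp K' G H' p = Some q \<and> dY q = Some y \<and> y \<in> f' x"
        using R jp a unfolding realizes_def eq by blast
    qed
  qed
  then show ?thesis unfolding W_red_iff using cK' cH' by blast
qed

lemma co_complete_N:
  fixes dX :: "'x rep" and f :: "'x \<Rightarrow> nat option" and dU :: "'u rep" and dV :: "'v rep" and g :: "'u \<Rightarrow> 'v set"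
  assumes domf: "dom f \<subseteq> ran dX" and nc: "\<exists>a\<in>dom f. \<exists>b\<in>dom f. f a \<noteq> f b" and pr: "problem dU dV g"
  shows "W_red (jump_rep dX) rep_nat (sv f) (completion dU) (completion dV) (cbar dV g) \<longleftrightarrow> W_red (jump_rep dX) rep_nat (sv f) dU dV g"
proof
  assume "W_red (jump_rep dX) rep_nat (sv f) dU dV g"
  then show "W_red (jump_rep dX) rep_nat (sv f) (completion dU) (completion dV) (cbar dV g)" by (rule cc_back)
next
  assume "W_red (jump_rep dX) rep_nat (sv f) (completion dU) (completion dV) (cbar dV g)"
  then obtain H K where H: "computable H" and K: "computable K"
    and red: "\<forall>G. realizes (completion dU) (completion dV) G (cbar dV g) \<longrightarrow> realizes (jump_rep dX) rep_nat (cmp K G H) (sv f)"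
    unfolding W_red_iff by blast
  define Gz where "Gz = chooser (completion dU) (completion dV) (cbar dV g)"
  have Gz: "realizes (completion dU) (completion dV) Gz (cbar dV g)" unfolding Gz_def by (rule chooser_cbar[OF pr])
  have "\<exists>pz M. \<forall>p' x. (\<forall>i<M. p' i = pz i) \<longrightarrow> jump_rep dX p' = Some x \<longrightarrow> x \<in> dom f \<longrightarrow> (\<exists>k. K p' = Some k \<and> goodc dU g k)"
    by (rule goodN[where R="\<lambda>G. realizes (completion dU) (completion dV) G (cbar dV g)" and dX=dX and K=K and H=H and f=f and Gz=Gz and good="goodc dU g" and okr="\<lambda>_. True"])
      (fact red, fact H, fact Gz, rule modif_cbar[OF Gz], assumption, simp, fact domf, fact nc)
  then obtain pz M where good: "\<forall>p' x. (\<forall>i<M. p' i = pz i) \<longrightarrow> jump_rep dX p' = Some x \<longrightarrow> x \<in> dom f \<longrightarrow> (\<exists>k. K p' = Some k \<and> goodc dU g k)"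
    by blast
  show "W_red (jump_rep dX) rep_nat (sv f) dU dV g"
    by (rule cc_forward[OF pr H K red]) (use good in \<open>simp add: pdom_sv\<close>)
qed

definition pad :: "nat \<Rightarrow> baire \<Rightarrow> baire" where "pad m w i = (if i < m then 0 else w (i - m))"

lemma enumerate_atLeast: "enumerate {m::nat..} n = m + n"
proof (induction n)
  case 0 then show ?case by (simp add: enumerate_0 Least_equality)
next
  case (Suc n)
  have "enumerate {m::nat..} (Suc n) = (LEAST s. s \<in> {m..} \<and> enumerate {m..} n < s)"
    by (rule enumerate_Suc'') (simp add: infinite_Ici)
  also have "\<dots> = m + Suc n" using Suc by (intro Least_equality) auto
  finally show ?case .
qed

lemma nzset_pad: "nzset (pad m (sucs q)) = {m..}"
  by (auto simp: nzset_def pad_def sucs_def)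

lemma minus1_pad: "minus1 (pad m (sucs q)) = q"
  by (rule ext) (simp add: minus1_def nzset_pad enumerate_atLeast pad_def sucs_def)

lemma completion_pad: "completion dU (pad m (sucs q)) = Some (dU q)"
  unfolding completion_def nzset_pad minus1_pad by (auto simp: infinite_Ici)

lemma completion_zero: "completion dU (\<lambda>_. 0) = Some None"
  by (simp add: completion_def nzset_def)

lemma rep_S_iff: "rep_S q = Some b \<longleftrightarrow> b = (\<exists>n. q n \<noteq> 0)"
  unfolding rep_S_def by auto

lemma claim_gen2:
  assumes red: "\<forall>G. R G \<longrightarrow> realizes (jump_rep dX) dY (cmp K G H) f'"
    and H: "computable H" and Gz: "R Gz"
    and pa: "jump_rep dX pa = Some a" "a \<in> pdom f'"
    and modif: "\<And>k r. \<not> good k \<Longrightarrow> okr r \<Longrightarrow> R (Gz(k := Some r))"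
    and okr: "\<And>k r. Gz k = Some r \<Longrightarrow> okr r"
  shows "\<exists>ra oa. H (bpair pa ra) = Some oa \<and> (\<exists>y. dY oa = Some y \<and> y \<in> f' a) \<and> (\<forall>n. \<exists>m.
     (\<forall>p' x. (\<forall>i<m. p' i = pa i) \<longrightarrow> jump_rep dX p' = Some x \<longrightarrow> x \<in> pdom f' \<longrightarrow> \<not> (\<exists>k. K p' = Some k \<and> good k) \<longrightarrow>
        (\<exists>ou' y. H (bpair p' ra) = Some ou' \<and> ou' n = oa n \<and> dY ou' = Some y \<and> y \<in> f' x)))"
proof -
  from red Gz pa obtain oa ya where ca: "cmp K Gz H pa = Some oa" "dY oa = Some ya" "ya \<in> f' a"
    unfolding realizes_def by blast
  from comp_Some[OF ca(1)] obtain ka ra where kra: "K pa = Some ka" "Gz ka = Some ra" "H (bpair pa ra) = Some oa"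
    by blast
  have main: "\<exists>m. \<forall>p' x. (\<forall>i<m. p' i = pa i) \<longrightarrow> jump_rep dX p' = Some x \<longrightarrow> x \<in> pdom f' \<longrightarrow> \<not> (\<exists>k. K p' = Some k \<and> good k) \<longrightarrow>
        (\<exists>ou' y. H (bpair p' ra) = Some ou' \<and> ou' n = oa n \<and> dY ou' = Some y \<and> y \<in> f' x)" for n
  proof -
    have "\<exists>m. \<forall>s' ou'. (\<forall>i<m. s' i = bpair pa ra i) \<longrightarrow> H s' = Some ou' \<longrightarrow> ou' n = oa n"
      by (rule cont_H[OF H, where s="bpair pa ra" and ou=oa, OF kra(3)])
    then obtain m where m: "\<forall>s' ou'. (\<forall>i<m. s' i = bpair pa ra i) \<longrightarrow> H s' = Some ou' \<longrightarrow> ou' n = oa n" ..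
    have "\<exists>ou' y. H (bpair p' ra) = Some ou' \<and> ou' n = oa n \<and> dY ou' = Some y \<and> y \<in> f' x"
      if ag: "\<forall>i<m. p' i = pa i" and jx: "jump_rep dX p' = Some x" and xd: "x \<in> pdom f'"
        and bad: "\<not> (\<exists>k. K p' = Some k \<and> good k)" for p' x
    proof -
      from red Gz jx xd obtain o0 where "cmp K Gz H p' = Some o0"
        unfolding realizes_def by blast
      then obtain k' where k': "K p' = Some k'" using comp_Some by blast
      have nb: "\<not> good k'" using bad k' by blast
      have G1: "R (Gz(k' := Some ra))" by (rule modif[OF nb okr[OF kra(2)]])
      from red G1 jx xd obtain ou' y where c1: "cmp K (Gz(k' := Some ra)) H p' = Some ou'" "dY ou' = Some y" "y \<in> f' x"
        unfolding realizes_def by blast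
      have Hp: "H (bpair p' ra) = Some ou'" using c1(1) k' comp_eq[where K=K and p=p' and k=k' and G="Gz(k' := Some ra)" and r=ra and H=H] by simp
      have "ou' n = oa n" using m bpair_agree[OF ag, of ra ra] Hp by simp
      then show ?thesis using Hp c1(2,3) by blast
    qed
    then show ?thesis by blast
  qed
  show ?thesis
    by (rule exI[of _ ra], rule exI[of _ oa]) (use kra(3) ca(2,3) main in blast)
qed

lemma claimS:
  fixes dU :: "'u rep" and dV :: "'v rep" and g :: "'u \<Rightarrow> 'v set"
  assumes red: "\<forall>G. realizes (completion dU) (completion dV) G (cbar dV g) \<longrightarrow> realizes (jump_rep dX) rep_S (cmp K G H) (sv fS)"
    and H: "computable H" and Gz: "realizes (completion dU) (completion dV) Gz (cbar dV g)"
    and pa: "jump_rep dX pa = Some t" and ft: "fS t = Some True"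
  shows "\<exists>m. \<forall>p' x. (\<forall>i<m. p' i = pa i) \<longrightarrow> jump_rep dX p' = Some x \<longrightarrow> fS x = Some False \<longrightarrow>
     (\<exists>k. K p' = Some k \<and> goodc dU g k)"
proof -
  have "\<exists>ra oa. H (bpair pa ra) = Some oa \<and> (\<exists>y. rep_S oa = Some y \<and> y \<in> sv fS t) \<and> (\<forall>n. \<exists>m.
     (\<forall>p' x. (\<forall>i<m. p' i = pa i) \<longrightarrow> jump_rep dX p' = Some x \<longrightarrow> x \<in> pdom (sv fS) \<longrightarrow> \<not> (\<exists>k. K p' = Some k \<and> goodc dU g k) \<longrightarrow>
        (\<exists>ou' y. H (bpair p' ra) = Some ou' \<and> ou' n = oa n \<and> rep_S ou' = Some y \<and> y \<in> sv fS x)))"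
  proof (rule claim_gen2[where R="\<lambda>G. realizes (completion dU) (completion dV) G (cbar dV g)" and dX=dX and dY=rep_S and K=K and H=H and f'="sv fS" and Gz=Gz and pa=pa and a=t and good="goodc dU g" and okr="\<lambda>_. True"])
    show "\<forall>G. realizes (completion dU) (completion dV) G (cbar dV g) \<longrightarrow> realizes (jump_rep dX) rep_S (cmp K G H) (sv fS)" by (fact red)
    show "computable H" by (fact H)
    show "realizes (completion dU) (completion dV) Gz (cbar dV g)" by (fact Gz)
    show "jump_rep dX pa = Some t" by (fact pa)
    show "t \<in> pdom (sv fS)" using ft by (simp add: pdom_sv domIff)
    show "\<And>k r. \<not> goodc dU g k \<Longrightarrow> True \<Longrightarrow> realizes (completion dU) (completion dV) (Gz(k := Some r)) (cbar dV g)"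
      by (rule modif_cbar[OF Gz])
    show "\<And>k r. Gz k = Some r \<Longrightarrow> True" by simp
  qed
  then obtain ra oa where c: "\<exists>y. rep_S oa = Some y \<and> y \<in> sv fS t" and
    cm: "\<forall>n. \<exists>m. \<forall>p' x. (\<forall>i<m. p' i = pa i) \<longrightarrow> jump_rep dX p' = Some x \<longrightarrow> x \<in> pdom (sv fS) \<longrightarrow> \<not> (\<exists>k. K p' = Some k \<and> goodc dU g k) \<longrightarrow>
        (\<exists>ou' y. H (bpair p' ra) = Some ou' \<and> ou' n = oa n \<and> rep_S ou' = Some y \<and> y \<in> sv fS x)"
    by blast
  from c ft have "rep_S oa = Some True" by (auto simp: sv_iff)
  then obtain n where n: "oa n \<noteq> 0" unfolding rep_S_iff by blast
  from cm obtain m where m: "\<forall>p' x. (\<forall>i<m. p' i = pa i) \<longrightarrow> jump_rep dX p' = Some x \<longrightarrow> x \<in> pdom (sv fS) \<longrightarrow> \<not> (\<exists>k. K p' = Some k \<and> goodc dU g k) \<longrightarrow>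
        (\<exists>ou' y. H (bpair p' ra) = Some ou' \<and> ou' n = oa n \<and> rep_S ou' = Some y \<and> y \<in> sv fS x)" by blast
  show ?thesis
  proof (rule exI[of _ m], intro allI impI)
    fix p' x assume a: "\<forall>i<m. p' i = pa i" "jump_rep dX p' = Some x" "fS x = Some False"
    show "\<exists>k. K p' = Some k \<and> goodc dU g k"
    proof (rule ccontr)
      assume bad: "\<not> (\<exists>k. K p' = Some k \<and> goodc dU g k)"
      have xd: "x \<in> pdom (sv fS)" using a(3) by (simp add: pdom_sv domIff)
      obtain ou' y where o: "ou' n = oa n" "rep_S ou' = Some y" "y \<in> sv fS x"
        using m a(1,2) xd bad by blast
      have "y = True" using o(1,2) n unfolding rep_S_iff by auto
      then show False using o(3) a(3) by (simp add: sv_iff)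
    qed
  qed
qed

lemma Gz_good:
  assumes Gz: "realizes (completion dU) (completion dV) Gz (cbar dV g)" and gk: "goodc dU g k"
  shows "\<exists>r v. Gz k = Some r \<and> dV (minus1 r) = Some v"
proof -
  obtain u where u: "completion dU k = Some (Some u)" "u \<in> pdom g" using gk unfolding goodc_def by blast
  have "\<exists>q z. Gz k = Some q \<and> completion dV q = Some z \<and> z \<in> cbar dV g (Some u)"
    by (rule Gz[unfolded realizes_def, rule_format]) (simp add: u(1) pdom_cbar)
  then obtain q z where q: "Gz k = Some q" "completion dV q = Some z" "z \<in> cbar dV g (Some u)" by blast
  have "z \<in> Some ` g u" using q(3) unfolding cbar_good[OF u(2)] .
  then obtain v where v: "z = Some v" by blast
  have "completion dV q = Some (Some v)" using q(2) v by simp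
  then have "infinite (nzset q) \<and> dV (minus1 q) = Some v" by (rule completion_SS)
  then show ?thesis using q(1) by blast
qed

lemma trueGood:
  fixes dU :: "'u rep" and dV :: "'v rep" and g :: "'u \<Rightarrow> 'v set"
  assumes red: "\<forall>G. realizes (completion dU) (completion dV) G (cbar dV g) \<longrightarrow> realizes (jump_rep dX) rep_S (cmp K G H) (sv fS)"
    and H: "computable H" and Gz: "realizes (completion dU) (completion dV) Gz (cbar dV g)"
    and qf: "dX qf = Some fl" and ff: "fS fl = Some False"
    and jx: "jump_rep dX p' = Some x" and fx: "fS x = Some True"
  shows "\<exists>k. K p' = Some k \<and> goodc dU g k"
proof (rule ccontr)
  assume bad: "\<not> (\<exists>k. K p' = Some k \<and> goodc dU g k)"
  have xd: "x \<in> pdom (sv fS)" using fx by (simp add: pdom_sv domIff)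
  obtain o0 where "cmp K Gz H p' = Some o0" using red Gz jx xd unfolding realizes_def by blast
  then obtain k' where k': "K p' = Some k'" using comp_Some by blast
  have nb: "\<not> goodc dU g k'" using bad k' by blast
  define zero :: baire where "zero = (\<lambda>_. 0)"
  have G3: "realizes (completion dU) (completion dV) (Gz(k' := Some zero)) (cbar dV g)"
    by (rule modif_cbar[OF Gz nb])
  from red G3 jx xd obtain o' y where c3: "cmp K (Gz(k' := Some zero)) H p' = Some o'" "rep_S o' = Some y" "y \<in> sv fS x"
    unfolding realizes_def by blast
  have Ho': "H (bpair p' zero) = Some o'"
    using c3(1) k' comp_eq[where K=K and p=p' and k=k' and G="Gz(k' := Some zero)" and r=zero and H=H] by simp
  have "y = True" using c3(3) fx by (simp add: sv_iff)
  then obtain n where n: "o' n \<noteq> 0" using c3(2) unfolding rep_S_iff by blast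
  have "\<exists>m. \<forall>s' ou'. (\<forall>i<m. s' i = bpair p' zero i) \<longrightarrow> H s' = Some ou' \<longrightarrow> ou' n = o' n"
    by (rule cont_H[OF H, where s="bpair p' zero" and ou=o', OF Ho'])
  then obtain m where m: "\<forall>s' ou'. (\<forall>i<m. s' i = bpair p' zero i) \<longrightarrow> H s' = Some ou' \<longrightarrow> ou' n = o' n" ..
  define G2 where "G2 = (\<lambda>k. if goodc dU g k then (case Gz k of None \<Rightarrow> None | Some r \<Rightarrow> Some (pad m (sucs (minus1 r)))) else Some zero)"
  have G2: "realizes (completion dU) (completion dV) G2 (cbar dV g)"
    unfolding realizes_def
  proof (intro allI impI)
    fix k y assume a: "completion dU k = Some y \<and> y \<in> pdom (cbar dV g)"
    show "\<exists>q z. G2 k = Some q \<and> completion dV q = Some z \<and> z \<in> cbar dV g y"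
    proof (cases "goodc dU g k")
      case True
      then obtain u where u: "completion dU k = Some (Some u)" "u \<in> pdom g" unfolding goodc_def by blast
      have "\<exists>q z. Gz k = Some q \<and> completion dV q = Some z \<and> z \<in> cbar dV g (Some u)"
        by (rule Gz[unfolded realizes_def, rule_format]) (simp add: u(1) pdom_cbar)
      then obtain q z where q: "Gz k = Some q" "completion dV q = Some z" "z \<in> cbar dV g (Some u)" by blast
      have "z \<in> Some ` g u" using q(3) unfolding cbar_good[OF u(2)] .
      then obtain v where v: "z = Some v" by blast
      have "completion dV q = Some (Some v)" using q(2) v by simp
      then have "infinite (nzset q) \<and> dV (minus1 q) = Some v" by (rule completion_SS)
      then have "completion dV (pad m (sucs (minus1 q))) = Some z" using v by (simp add: completion_pad)
      moreover have "G2 k = Some (pad m (sucs (minus1 q)))" unfolding G2_def using True q(1) by simp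
      moreover have "y = Some u" using a u(1) by simp
      ultimately show ?thesis using q(3) by blast
    next
      case False
      then have "\<not> (\<exists>u. y = Some u \<and> u \<in> pdom g)" using a unfolding goodc_def by blast
      then have "cbar dV g y = carrier_bar dV" by (rule cbar_bad)
      moreover have "completion dV zero = Some None" unfolding zero_def by (rule completion_zero)
      moreover have "G2 k = Some zero" unfolding G2_def using False by simp
      ultimately show ?thesis by (auto simp: carrier_bar_def)
    qed
  qed
  define p'' where "p'' = sp p' m qf"
  have jf: "jump_rep dX p'' = Some fl" unfolding p''_def by (rule jump_sp[where dX=dX and q=qf and x=fl, OF qf])
  have fd: "fl \<in> pdom (sv fS)" using ff by (simp add: pdom_sv domIff)
  from red G2 jf fd obtain o'' y'' where c2: "cmp K G2 H p'' = Some o''" "rep_S o'' = Some y''" "y'' \<in> sv fS fl"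
    unfolding realizes_def by blast
  from comp_Some[OF c2(1)] obtain k'' r'' where kr: "K p'' = Some k''" "G2 k'' = Some r''" "H (bpair p'' r'') = Some o''"
    by blast
  have rz: "\<forall>i<m. r'' i = zero i"
    using kr(2) unfolding G2_def by (auto simp: pad_def zero_def split: if_splits option.splits)
  have pz: "\<forall>i<m. p'' i = p' i" unfolding p''_def using sp_agree by blast
  have "o'' n = o' n" using m bpair_agree[OF pz rz] kr(3) by simp
  then have "y'' = True" using c2(2) n unfolding rep_S_iff by auto
  then show False using c2(3) ff by (simp add: sv_iff)
qed

lemma co_complete_S:
  fixes dX :: "'x rep" and fS :: "'x \<Rightarrow> bool option" and dU :: "'u rep" and dV :: "'v rep" and g :: "'u \<Rightarrow> 'v set"
  assumes domf: "dom fS \<subseteq> ran dX" and nc: "\<exists>a\<in>dom fS. \<exists>b\<in>dom fS. fS a \<noteq> fS b" and pr: "problem dU dV g"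
  shows "W_red (jump_rep dX) rep_S (sv fS) (completion dU) (completion dV) (cbar dV g) \<longleftrightarrow> W_red (jump_rep dX) rep_S (sv fS) dU dV g"
proof
  assume "W_red (jump_rep dX) rep_S (sv fS) dU dV g"
  then show "W_red (jump_rep dX) rep_S (sv fS) (completion dU) (completion dV) (cbar dV g)" by (rule cc_back)
next
  assume "W_red (jump_rep dX) rep_S (sv fS) (completion dU) (completion dV) (cbar dV g)"
  then obtain H K where H: "computable H" and K: "computable K"
    and red: "\<forall>G. realizes (completion dU) (completion dV) G (cbar dV g) \<longrightarrow> realizes (jump_rep dX) rep_S (cmp K G H) (sv fS)"
    unfolding W_red_iff by blast
  define Gz where "Gz = chooser (completion dU) (completion dV) (cbar dV g)"
  have Gz: "realizes (completion dU) (completion dV) Gz (cbar dV g)" unfolding Gz_def by (rule chooser_cbar[OF pr])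
  obtain t fl where tf: "fS t = Some True" "fS fl = Some False"
  proof -
    obtain a b where ab: "a \<in> dom fS" "b \<in> dom fS" "fS a \<noteq> fS b" using nc by blast
    then obtain va vb where v: "fS a = Some va" "fS b = Some vb" "va \<noteq> vb" by auto
    show ?thesis
    proof (cases va)
      case True then show ?thesis using that v by (cases vb) auto
    next
      case False then show ?thesis using that v by (cases vb) auto
    qed
  qed
  obtain qt where qt: "dX qt = Some t" using tf(1) domf unfolding ran_def by blast
  obtain qf where qf: "dX qf = Some fl" using tf(2) domf unfolding ran_def by blast
  have pt: "jump_rep dX (cj qt) = Some t" by (rule jump_cj[where dX=dX and q=qt and x=t, OF qt])
  have "\<exists>m. \<forall>p' x. (\<forall>i<m. p' i = cj qt i) \<longrightarrow> jump_rep dX p' = Some x \<longrightarrow> fS x = Some False \<longrightarrow>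
     (\<exists>k. K p' = Some k \<and> goodc dU g k)"
    by (rule claimS[where dU=dU and dV=dV and g=g and dX=dX and K=K and H=H and fS=fS and Gz=Gz and pa="cj qt" and t=t])
      (fact red, fact H, fact Gz, fact pt, fact tf(1))
  then obtain m where m: "\<forall>p' x. (\<forall>i<m. p' i = cj qt i) \<longrightarrow> jump_rep dX p' = Some x \<longrightarrow> fS x = Some False \<longrightarrow>
     (\<exists>k. K p' = Some k \<and> goodc dU g k)" ..
  have good: "\<forall>p' x. (\<forall>i<m. p' i = cj qt i) \<longrightarrow> jump_rep dX p' = Some x \<longrightarrow> x \<in> pdom (sv fS) \<longrightarrow> (\<exists>k. K p' = Some k \<and> goodc dU g k)"
  proof (intro allI impI)
    fix p' x assume a: "\<forall>i<m. p' i = cj qt i" "jump_rep dX p' = Some x" "x \<in> pdom (sv fS)"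
    then have "x \<in> dom fS" by (simp add: pdom_sv)
    then obtain v where v: "fS x = Some v" by blast
    show "\<exists>k. K p' = Some k \<and> goodc dU g k"
    proof (cases v)
      case True
      show ?thesis
        by (rule trueGood[where dU=dU and dV=dV and g=g and dX=dX and K=K and H=H and fS=fS and Gz=Gz and qf=qf and fl=fl and p'=p' and x=x])
          (fact red, fact H, fact Gz, fact qf, fact tf(2), fact a(2), use v True in simp)
    next
      case False
      then have "fS x = Some False" using v by simp
      then show ?thesis using m a(1,2) by blast
    qed
  qed
  show "W_red (jump_rep dX) rep_S (sv fS) dU dV g"
    by (rule cc_forward[where dU=dU and dV=dV and g=g and dX=dX and K=K and H=H and f'="sv fS" and dY=rep_S and M=m and pz="cj qt"])
      (fact pr, fact H, fact K, fact red, fact good)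
qed

theorem proposition4p19:
  fixes dX :: "'x rep" and f :: "'x \<Rightarrow> nat option" and fS :: "'x \<Rightarrow> bool option"
  assumes "dom f \<subseteq> ran dX" and "\<exists>a\<in>dom f. \<exists>b\<in>dom f. f a \<noteq> f b"
    and "dom fS \<subseteq> ran dX" and "\<exists>a\<in>dom fS. \<exists>b\<in>dom fS. fS a \<noteq> fS b"
  shows "co_complete TYPE('u) TYPE('v) (jump_rep dX) rep_nat (sv f)
       \<and> co_total TYPE('u) TYPE('v) (jump_rep dX) rep_nat (sv f)
       \<and> co_complete TYPE('u) TYPE('v) (jump_rep dX) rep_S (sv fS)"
proof (intro conjI)
  show "co_complete TYPE('u) TYPE('v) (jump_rep dX) rep_nat (sv f)"
    unfolding co_complete_def
  proof (intro allI impI)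
    fix dU :: "'u rep" and dV :: "'v rep" and g :: "'u \<Rightarrow> 'v set"
    assume "problem dU dV g"
    then show "W_red (jump_rep dX) rep_nat (sv f) (completion dU) (completion dV) (cbar dV g) \<longleftrightarrow> W_red (jump_rep dX) rep_nat (sv f) dU dV g"
      by (rule co_complete_N[OF assms(1,2)])
  qed
  show "co_total TYPE('u) TYPE('v) (jump_rep dX) rep_nat (sv f)"
    unfolding co_total_def
  proof (intro allI impI)
    fix dU :: "'u rep" and dV :: "'v rep" and g :: "'u \<Rightarrow> 'v set"
    assume "problem dU dV g"
    then show "W_red (jump_rep dX) rep_nat (sv f) dU dV (Ttot dV g) \<longleftrightarrow> W_red (jump_rep dX) rep_nat (sv f) dU dV g"
      by (rule co_total_N[OF assms(1,2)])
  qed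
  show "co_complete TYPE('u) TYPE('v) (jump_rep dX) rep_S (sv fS)"
    unfolding co_complete_def
  proof (intro allI impI)
    fix dU :: "'u rep" and dV :: "'v rep" and g :: "'u \<Rightarrow> 'v set"
    assume "problem dU dV g"
    then show "W_red (jump_rep dX) rep_S (sv fS) (completion dU) (completion dV) (cbar dV g) \<longleftrightarrow> W_red (jump_rep dX) rep_S (sv fS) dU dV g"
      by (rule co_complete_S[OF assms(3,4)])
  qed
qed

end
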